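(* Let $U\subset\mathbb R^n$ be open, $Y$ a finite dimensional normed vector space, $D\subset Y$ closed, $K\subset Y\setminus D$ compact, $V\in\mathbf V_m(U)$ with $\|\delta V\|$ a Radon measure and $\|\delta V\|_{\mathrm{sing}}=0$ (singular part with respect to $\|V\|$), and $f\in\mathbf T(V,Y)$ such that $\|V\|(U\setminus f^{-1}[D\cup K])=0$ and $\|V\|(f^{-1}[K])>0$. Then there exists a partitioned component $W\in\mathbf V_m(U)$ of $V$ in $U$ such that (1) $\|W\|(U\setminus f^{-1}[K])=0$, and (2) $f\in\mathbf T(W,Y)$.
   Context: Notation: $\mathbf V_m(U)$ the $m$-dimensional varifolds in $U$; $\|V\|$ weight, $\delta V$ first variation, $\|\delta V\|$ its total variation. $V\partial E=(\delta V)\llcorner E-\delta(V\llcorner(E\times\mathbf G(n,m)))$ for $(\|V\|+\|\delta V\|)$-measurable $E\subset U$. A partitioned component of $V$ in $U$ is $W=V\llcorner(E\times\mathbf G(n,m))$ with $\|V\|(E)>0$ and $V\partial E=0$. $\mathbf T(V,Y)$ denotes the class of generalised $V$-weakly differentiable $Y$-valued functions in the sense of Menne (Definition 8.3 of "Weakly differentiable functions on varifolds", Indiana Univ. Math. J. 2016): roughly, $f$ is $(\|V\|+\|\delta V\|)$-measurable with the local integrability conditions of that definition, and there exists a $\|V\|$-measurable $\operatorname{Hom}(\mathbb R^n,Y)$-valued function $V\mathbf Df$ (the generalised $V$-weak derivative) such that for all $\theta\in C^\infty_c(U,\mathbb R^n)$ and all smooth $\gamma:Y\to\mathbb R$ with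 $\operatorname{spt}D\gamma$ compact, $$\delta V((\gamma\circ f)\theta)=\int\gamma(f(x))\,P_\natural\bullet D\theta(x)\,dV(x,P)+\int\langle\theta(x),D\gamma(f(x))\circ V\mathbf Df(x)\rangle\,d\|V\|(x),$$ where $P_\natural$ is the orthogonal projection onto $P$. *)

theory Defs
  imports "HOL-Analysis.Analysis"
begin

coinductive smooth_on :: "'a::real_normed_vector set \<Rightarrow> ('a \<Rightarrow> 'b::real_normed_vector) \<Rightarrow> bool"
  where
  "f differentiable_on S \<Longrightarrow> (\<And>v. smooth_on S (\<lambda>x. frechet_derivative f (at x) v))
     \<Longrightarrow> smooth_on S f"

definition support_of :: "('a::real_normed_vector \<Rightarrow> 'b::real_normed_vector) \<Rightarrow> 'a set" where
  "support_of f = closure {x. f x \<noteq> 0}"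

text \<open>Test vector fields \<open>\<D>(U,R^n)\<close> (extended by zero outside U).\<close>
definition test_field :: "'a::euclidean_space set \<Rightarrow> ('a \<Rightarrow> 'a) \<Rightarrow> bool" where
  "test_field U \<theta> \<longleftrightarrow> smooth_on UNIV \<theta> \<and> compact (support_of \<theta>) \<and> support_of \<theta> \<subseteq> U"

definition admissible_gamma :: "('y::euclidean_space \<Rightarrow> real) \<Rightarrow> bool" where
  "admissible_gamma \<gamma> \<longleftrightarrow> smooth_on UNIV \<gamma> \<and>
     compact (closure {y. frechet_derivative \<gamma> (at y) \<noteq> (\<lambda>_. 0)})"

text \<open>G(n,m), each m-dimensional subspace P identified with the orthogonal
  projection onto P.\<close>
definition grass :: "nat \<Rightarrow> ('a::euclidean_space \<Rightarrow>\<^sub>L 'a) set" where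
  "grass m = {P :: 'a \<Rightarrow>\<^sub>L 'a. (\<forall>x. blinfun_apply P (blinfun_apply P x) = blinfun_apply P x) \<and> (\<forall>x y. inner (blinfun_apply P x) y = inner x (blinfun_apply P y))
                 \<and> dim (range (blinfun_apply P)) = m}"

definition radon_on :: "'a::euclidean_space set \<Rightarrow> 'a measure \<Rightarrow> bool" where
  "radon_on U \<mu> \<longleftrightarrow> sets \<mu> = sets borel \<and> emeasure \<mu> (- U) = 0 \<and>
     (\<forall>C. compact C \<and> C \<subseteq> U \<longrightarrow> emeasure \<mu> C < \<infinity>)"

definition varifold :: "'a::euclidean_space set \<Rightarrow> nat \<Rightarrow> ('a \<times> ('a \<Rightarrow>\<^sub>L 'a)) measure \<Rightarrow> bool" where
  "varifold U m V \<longleftrightarrow> sets V = sets borel \<and> emeasure V (- (U \<times> grass m)) = 0 \<and>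
     (\<forall>C. compact C \<and> C \<subseteq> U \<longrightarrow> emeasure V (C \<times> UNIV) < \<infinity>)"

definition weight :: "('a::euclidean_space \<times> ('a \<Rightarrow>\<^sub>L 'a)) measure \<Rightarrow> 'a measure" where
  "weight V = distr V borel fst"

definition proj_div :: "('a::euclidean_space \<Rightarrow> 'a) \<Rightarrow> 'a \<Rightarrow> ('a \<Rightarrow>\<^sub>L 'a) \<Rightarrow> real" where
  "proj_div \<theta> x P = (\<Sum>b\<in>Basis. inner (blinfun_apply P (frechet_derivative \<theta> (at x) b)) b)"

definition first_variation :: "('a::euclidean_space \<times> ('a \<Rightarrow>\<^sub>L 'a)) measure \<Rightarrow> ('a \<Rightarrow> 'a) \<Rightarrow> real" where
  "first_variation V \<theta> = integral\<^sup>L V (\<lambda>(x, P). proj_div \<theta> x P)"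

text \<open>\<open>\<parallel>\<delta>V\<parallel>\<close> is a Radon measure, represented by \<open>\<mu> = \<parallel>\<delta>V\<parallel>\<close> and a \<mu>-measurable
  unit vector field \<eta> with \<open>\<delta>V(\<theta>) = \<integral> \<langle>\<theta>,\<eta>\<rangle> d\<parallel>\<delta>V\<parallel>\<close>; this representation is
  also how \<open>\<delta>V\<close> is applied to non-smooth (bounded, compactly supported)
  vector fields.\<close>
definition fv_rep :: "'a::euclidean_space set \<Rightarrow> ('a \<times> ('a \<Rightarrow>\<^sub>L 'a)) measure \<Rightarrow> 'a measure \<Rightarrow> ('a \<Rightarrow> 'a) \<Rightarrow> bool" where
  "fv_rep U V \<mu> \<eta> \<longleftrightarrow> radon_on U \<mu> \<and> \<eta> \<in> borel_measurable (completion \<mu>) \<and>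
     (AE x in \<mu>. norm (\<eta> x) = 1) \<and>
     (\<forall>\<theta>. test_field U \<theta> \<longrightarrow> first_variation V \<theta> = integral\<^sup>L \<mu> (\<lambda>x. inner (\<theta> x) (\<eta> x)))"

definition restr_var :: "('a::euclidean_space \<times> ('a \<Rightarrow>\<^sub>L 'a)) measure \<Rightarrow> 'a set \<Rightarrow> ('a \<times> ('a \<Rightarrow>\<^sub>L 'a)) measure" where
  "restr_var V E = measure_of UNIV (sets borel) (\<lambda>A. emeasure (completion V) (A \<inter> (E \<times> UNIV)))"

text \<open>E is \<open>(\<parallel>V\<parallel> + \<parallel>\<delta>V\<parallel>)\<close>-measurable.\<close>
definition meas_set :: "('a::euclidean_space \<times> ('a \<Rightarrow>\<^sub>L 'a)) measure \<Rightarrow> 'a measure \<Rightarrow> 'a set \<Rightarrow> bool" where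
  "meas_set V \<mu> E \<longleftrightarrow> E \<in> sets (completion (weight V)) \<and> E \<in> sets (completion \<mu>)"

text \<open>\<open>V\<partial>E = (\<delta>V)\<llcorner>E - \<delta>(V\<llcorner>(E\<times>\<G>(n,m))) = 0\<close> on test fields.\<close>
definition boundary_zero :: "'a::euclidean_space set \<Rightarrow> ('a \<times> ('a \<Rightarrow>\<^sub>L 'a)) measure \<Rightarrow> 'a measure \<Rightarrow> ('a \<Rightarrow> 'a) \<Rightarrow> 'a set \<Rightarrow> bool" where
  "boundary_zero U V \<mu> \<eta> E \<longleftrightarrow>
     (\<forall>\<theta>. test_field U \<theta> \<longrightarrow>
        integral\<^sup>L (completion \<mu>) (\<lambda>x. indicator E x * inner (\<theta> x) (\<eta> x))
        - first_variation (restr_var V E) \<theta> = 0)"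

definition partitioned_component :: "'a::euclidean_space set \<Rightarrow> nat \<Rightarrow> ('a \<times> ('a \<Rightarrow>\<^sub>L 'a)) measure \<Rightarrow> ('a \<times> ('a \<Rightarrow>\<^sub>L 'a)) measure \<Rightarrow> bool" where
  "partitioned_component U m V W \<longleftrightarrow>
     (\<exists>E \<mu> \<eta>. fv_rep U V \<mu> \<eta> \<and> E \<subseteq> U \<and> meas_set V \<mu> E \<and>
        emeasure (completion (weight V)) E > 0 \<and> boundary_zero U V \<mu> \<eta> E \<and>
        W = restr_var V E)"

definition gen_weakly_diff :: "'a::euclidean_space set \<Rightarrow> ('a \<times> ('a \<Rightarrow>\<^sub>L 'a)) measure \<Rightarrow> ('a \<Rightarrow> 'y::euclidean_space) \<Rightarrow> bool" where
  "gen_weakly_diff U V f \<longleftrightarrow>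
     (\<exists>\<mu> \<eta>. fv_rep U V \<mu> \<eta> \<and>
        f \<in> borel_measurable (completion (weight V)) \<and> f \<in> borel_measurable (completion \<mu>) \<and>
        (\<forall>C s. compact C \<and> C \<subseteq> U \<and> 0 \<le> s \<longrightarrow>
           emeasure (completion (weight V)) (C \<inter> {x. norm (f x) > s}) < \<infinity> \<and>
           emeasure (completion \<mu>) (C \<inter> {x. norm (f x) > s}) < \<infinity>) \<and>
        (\<exists>F :: 'a \<Rightarrow> ('a \<Rightarrow>\<^sub>L 'y).
           F \<in> borel_measurable (completion (weight V)) \<and>
           (\<forall>C s. compact C \<and> C \<subseteq> U \<and> 0 \<le> s \<longrightarrow>
              (\<integral>\<^sup>+ x. indicator (C \<inter> {x. norm (f x) \<le> s}) x * ennreal (norm (F x))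
                 \<partial>completion (weight V)) < \<infinity>) \<and>
           (\<forall>\<theta> \<gamma>. test_field U \<theta> \<and> admissible_gamma \<gamma> \<longrightarrow>
              integral\<^sup>L (completion \<mu>) (\<lambda>x. \<gamma> (f x) * inner (\<theta> x) (\<eta> x))
              = integral\<^sup>L (completion V) (\<lambda>(x, P). \<gamma> (f x) * proj_div \<theta> x P)
                + integral\<^sup>L (completion (weight V))
                    (\<lambda>x. frechet_derivative \<gamma> (at (f x)) (blinfun_apply (F x) (\<theta> x))))))"

end

theory Submission
  imports Defs "HOL-Computational_Algebra.Polynomial"
begin







lemma fd_local:
  assumes "open T" "x \<in> T" "\<And>y. y \<in> T \<Longrightarrow> f y = g y"
  shows "frechet_derivative f (at x) = frechet_derivative g (at x)"
proof -
  have "(\<lambda>D. (f has_derivative D) (at x)) = (\<lambda>D. (g has_derivative D) (at x))"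
  proof (intro ext iffI)
    fix D assume "(f has_derivative D) (at x)"
    then show "(g has_derivative D) (at x)"
      using has_derivative_transform_within_open[OF _ assms(1,2)] assms(3) by blast
  next
    fix D assume "(g has_derivative D) (at x)"
    then show "(f has_derivative D) (at x)"
      using has_derivative_transform_within_open[OF _ assms(1,2)] assms(3) by (metis)
  qed
  then show ?thesis unfolding frechet_derivative_def by simp
qed

lemma smooth_diff: "smooth_on S f \<Longrightarrow> f differentiable_on S"
  by (erule smooth_on.cases) auto

lemma smooth_deriv: "smooth_on S f \<Longrightarrow> smooth_on S (\<lambda>x. frechet_derivative f (at x) v)"
  by (erule smooth_on.cases) auto

lemma smooth_coinduct:
  assumes "P f"
    and "\<And>g. P g \<Longrightarrow> g differentiable_on S \<and>
          (\<forall>v. P (\<lambda>x. frechet_derivative g (at x) v) \<or> smooth_on S (\<lambda>x. frechet_derivative g (at x) v))"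
  shows "smooth_on S f"
  using assms(1)
proof (coinduction arbitrary: f rule: smooth_on.coinduct)
  case (smooth_on f)
  then show ?case using assms(2)[of f] by blast
qed

lemma diff_on_at: "open S \<Longrightarrow> x \<in> S \<Longrightarrow> f differentiable_on S \<Longrightarrow> f differentiable (at x)"
  by (simp add: differentiable_on_eq_differentiable_at)

lemma has_derivative_sum_list:
  assumes "\<And>h. h \<in> set l \<Longrightarrow> h differentiable (at x)"
  shows "((\<lambda>y. \<Sum>h\<leftarrow>l. h y) has_derivative (\<lambda>w. \<Sum>h\<leftarrow>l. frechet_derivative h (at x) w)) (at x)"
  using assms
proof (induction l)
  case Nil
  then show ?case by (simp add: has_derivative_const)
next
  case (Cons a l)
  have "(a has_derivative frechet_derivative a (at x)) (at x)"
    using Cons.prems frechet_derivative_works by auto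
  from has_derivative_add[OF this Cons.IH] Cons.prems show ?case by simp
qed

lemma sum_list_concat_map:
  "(\<Sum>h\<leftarrow>concat (map L l). h x) = (\<Sum>h\<leftarrow>l. (\<Sum>k\<leftarrow>L h. k x))"
  by (induction l) auto

lemma smooth_coinduct_sum:
  fixes P :: "('a::real_normed_vector \<Rightarrow> 'b::real_normed_vector) \<Rightarrow> bool"
  assumes S: "open S" and "P f"
    and step: "\<And>g. P g \<Longrightarrow> g differentiable_on S \<and>
          (\<forall>v. \<exists>l. (\<forall>h\<in>set l. P h \<or> smooth_on S h) \<and>
             (\<forall>x\<in>S. frechet_derivative g (at x) v = (\<Sum>h\<leftarrow>l. h x)))"
  shows "smooth_on S f"
proof -
  define Q where "Q k \<longleftrightarrow> (\<exists>l. (\<forall>h\<in>set l. P h \<or> smooth_on S h) \<and> (\<forall>x\<in>S. k x = (\<Sum>h\<leftarrow>l. h x)))" for k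
  have "Q f" unfolding Q_def using \<open>P f\<close> by (intro exI[of _ "[f]"]) auto
  then show ?thesis
  proof (rule smooth_coinduct)
    fix k assume "Q k"
    then obtain l where l: "\<forall>h\<in>set l. P h \<or> smooth_on S h" "\<forall>x\<in>S. k x = (\<Sum>h\<leftarrow>l. h x)"
      unfolding Q_def by blast
    have hd: "h differentiable_on S" if "h \<in> set l" for h
      using l(1) that step smooth_diff by blast
    have hder: "((\<lambda>y. \<Sum>h\<leftarrow>l. h y) has_derivative (\<lambda>w. \<Sum>h\<leftarrow>l. frechet_derivative h (at x) w)) (at x)"
      if "x \<in> S" for x
      by (rule has_derivative_sum_list) (use hd S that diff_on_at in blast)
    have kder: "(k has_derivative (\<lambda>w. \<Sum>h\<leftarrow>l. frechet_derivative h (at x) w)) (at x)" if "x \<in> S" for x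
      using has_derivative_transform_within_open[OF hder[OF that] S that] l(2) by auto
    have "k differentiable_on S"
      using kder by (meson differentiable_at_imp_differentiable_on differentiable_def)
    moreover have "Q (\<lambda>x. frechet_derivative k (at x) v)" for v
    proof -
      have "\<forall>h. \<exists>lh. P h \<longrightarrow> (\<forall>h'\<in>set lh. P h' \<or> smooth_on S h') \<and>
             (\<forall>x\<in>S. frechet_derivative h (at x) v = (\<Sum>h'\<leftarrow>lh. h' x))"
        using step by blast
      then obtain LP where LP: "\<And>h. P h \<Longrightarrow> (\<forall>h'\<in>set (LP h). P h' \<or> smooth_on S h') \<and>
             (\<forall>x\<in>S. frechet_derivative h (at x) v = (\<Sum>h'\<leftarrow>LP h. h' x))"
        by metis
      define L where "L h = (if P h then LP h else [\<lambda>x. frechet_derivative h (at x) v])" for h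
      show ?thesis unfolding Q_def
      proof (intro exI[of _ "concat (map L l)"] conjI ballI)
        fix h' assume "h' \<in> set (concat (map L l))"
        then obtain h where h: "h \<in> set l" "h' \<in> set (L h)" by auto
        show "P h' \<or> smooth_on S h'"
        proof (cases "P h")
          case True then show ?thesis using LP h by (auto simp: L_def)
        next
          case False then have "smooth_on S h" using l h by auto
          then show ?thesis using False h by (auto simp: L_def intro: smooth_deriv)
        qed
      next
        fix x assume x: "x \<in> S"
        have "frechet_derivative k (at x) v = (\<Sum>h\<leftarrow>l. frechet_derivative h (at x) v)"
          using frechet_derivative_at[OF kder[OF x]] by metis
        also have "\<dots> = (\<Sum>h\<leftarrow>l. (\<Sum>k\<leftarrow>L h. k x))"
          by (rule arg_cong[where f=sum_list], rule map_cong) (use LP x in \<open>auto simp: L_def\<close>)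
        also have "\<dots> = (\<Sum>h\<leftarrow>concat (map L l). h x)" by (simp add: sum_list_concat_map)
        finally show "frechet_derivative k (at x) v = (\<Sum>h\<leftarrow>concat (map L l). h x)" .
      qed
    qed
    ultimately show "k differentiable_on S \<and> (\<forall>v. Q (\<lambda>x. frechet_derivative k (at x) v) \<or>
          smooth_on S (\<lambda>x. frechet_derivative k (at x) v))" by blast
  qed
qed




lemma diff_on_transform:
  assumes "open S" "f differentiable_on S" "\<And>x. x \<in> S \<Longrightarrow> f x = h x"
  shows "h differentiable_on S"
proof -
  have "h differentiable (at x)" if "x \<in> S" for x
  proof -
    from diff_on_at[OF assms(1) that assms(2)] obtain D where "(f has_derivative D) (at x)"
      unfolding differentiable_def by blast
    from has_derivative_transform_within_open[OF this assms(1) that] assms(3)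
    show ?thesis unfolding differentiable_def by blast
  qed
  then show ?thesis by (simp add: differentiable_at_imp_differentiable_on)
qed

lemma fd_at_S:
  assumes "open S" "x \<in> S" "f differentiable_on S"
  shows "(f has_derivative frechet_derivative f (at x)) (at x)"
  using diff_on_at[OF assms] frechet_derivative_works by blast

lemma step_helper:
  assumes "h differentiable_on S" "\<And>v. \<forall>x\<in>S. frechet_derivative h (at x) v = (\<Sum>k\<leftarrow>L v. k x)"
    "\<And>v. \<forall>k\<in>set (L v). P k \<or> smooth_on S k"
  shows "h differentiable_on S \<and> (\<forall>v. \<exists>l. (\<forall>h\<in>set l. P h \<or> smooth_on S h) \<and>
             (\<forall>x\<in>S. frechet_derivative h (at x) v = (\<Sum>h\<leftarrow>l. h x)))"
  using assms by blast

lemma smooth_cong: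
  fixes f h :: "'a::real_normed_vector \<Rightarrow> 'b::real_normed_vector"
  assumes S: "open S" and f: "smooth_on S f" and eq: "\<And>x. x \<in> S \<Longrightarrow> f x = h x"
  shows "smooth_on S h"
proof -
  define P where "P h \<longleftrightarrow> (\<exists>f. smooth_on S f \<and> (\<forall>x\<in>S. f x = h x))" for h :: "'a \<Rightarrow> 'b"
  have "P h" using f eq unfolding P_def by blast
  then show ?thesis
  proof (rule smooth_coinduct_sum[OF S])
    fix h assume "P h"
    then obtain f where f: "smooth_on S f" "\<forall>x\<in>S. f x = h x" unfolding P_def by blast
    have "h differentiable_on S" using diff_on_transform[OF S smooth_diff[OF f(1)]] f(2) by blast
    moreover have "\<forall>x\<in>S. frechet_derivative h (at x) v = (\<Sum>h\<leftarrow>[\<lambda>x. frechet_derivative f (at x) v]. h x)" for v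
      using fd_local[OF S, of _ f h] f(2) by simp
    ultimately show "h differentiable_on S \<and> (\<forall>v. \<exists>l. (\<forall>h\<in>set l. P h \<or> smooth_on S h) \<and>
             (\<forall>x\<in>S. frechet_derivative h (at x) v = (\<Sum>h\<leftarrow>l. h x)))"
      using smooth_deriv[OF f(1)] by (intro step_helper[where L="\<lambda>v. [\<lambda>x. frechet_derivative f (at x) v]"]) auto
  qed
qed

lemma fd_eqI: "(h has_derivative D) (at x) \<Longrightarrow> frechet_derivative h (at x) v = D v"
  using frechet_derivative_at by metis

lemma smooth_const: "smooth_on S (\<lambda>x::'a::real_normed_vector. c::'b::real_normed_vector)"
proof -
  define P where "P h \<longleftrightarrow> (\<exists>c. h = (\<lambda>x. c))" for h :: "'a \<Rightarrow> 'b"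
  have "P (\<lambda>x. c)" unfolding P_def by blast
  then show ?thesis
  proof (rule smooth_coinduct)
    fix h assume "P h"
    then obtain c where h: "h = (\<lambda>x. c)" unfolding P_def by blast
    show "h differentiable_on S \<and> (\<forall>v. P (\<lambda>x. frechet_derivative h (at x) v) \<or>
        smooth_on S (\<lambda>x. frechet_derivative h (at x) v))"
      unfolding h P_def by (simp, blast)
  qed
qed

lemma smooth_add:
  fixes f g :: "'a::real_normed_vector \<Rightarrow> 'b::real_normed_vector"
  assumes S: "open S" and "smooth_on S f" "smooth_on S g"
  shows "smooth_on S (\<lambda>x. f x + g x)"
proof -
  define P where "P h \<longleftrightarrow> (\<exists>f g. smooth_on S f \<and> smooth_on S g \<and> (\<forall>x\<in>S. h x = f x + g x))" for h :: "'a \<Rightarrow> 'b"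
  have "P (\<lambda>x. f x + g x)" using assms unfolding P_def by blast
  then show ?thesis
  proof (rule smooth_coinduct_sum[OF S])
    fix h assume "P h"
    then obtain f g where fg: "smooth_on S f" "smooth_on S g" "\<forall>x\<in>S. h x = f x + g x" unfolding P_def by blast
    have d: "(h has_derivative (\<lambda>w. frechet_derivative f (at x) w + frechet_derivative g (at x) w)) (at x)"
      if "x \<in> S" for x
      using has_derivative_transform_within_open[OF has_derivative_add[OF fd_at_S[OF S that smooth_diff[OF fg(1)]]
          fd_at_S[OF S that smooth_diff[OF fg(2)]]] S that] fg(3) by auto
    have "h differentiable_on S"
      using d by (meson differentiable_at_imp_differentiable_on differentiable_def)
    moreover have "\<forall>x\<in>S. frechet_derivative h (at x) v =
       (\<Sum>h\<leftarrow>[\<lambda>x. frechet_derivative f (at x) v, \<lambda>x. frechet_derivative g (at x) v]. h x)" for v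
      using fd_eqI[OF d] by simp
    ultimately show "h differentiable_on S \<and> (\<forall>v. \<exists>l. (\<forall>h\<in>set l. P h \<or> smooth_on S h) \<and>
             (\<forall>x\<in>S. frechet_derivative h (at x) v = (\<Sum>h\<leftarrow>l. h x)))"
      using smooth_deriv[OF fg(1)] smooth_deriv[OF fg(2)] by (intro step_helper[where L="\<lambda>v. [\<lambda>x. frechet_derivative f (at x) v, \<lambda>x. frechet_derivative g (at x) v]"]) auto
  qed
qed




lemma smooth_mult:
  fixes f g :: "'a::real_normed_vector \<Rightarrow> real"
  assumes S: "open S" and "smooth_on S f" "smooth_on S g"
  shows "smooth_on S (\<lambda>x. f x * g x)"
proof -
  define P where "P h \<longleftrightarrow> (\<exists>f g. smooth_on S f \<and> smooth_on S g \<and> (\<forall>x\<in>S. h x = f x * g x))" for h :: "'a \<Rightarrow> real"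
  have "P (\<lambda>x. f x * g x)" using assms unfolding P_def by blast
  then show ?thesis
  proof (rule smooth_coinduct_sum[OF S])
    fix h assume "P h"
    then obtain f g where fg: "smooth_on S f" "smooth_on S g" "\<forall>x\<in>S. h x = f x * g x" unfolding P_def by blast
    have d: "(h has_derivative (\<lambda>w. f x * frechet_derivative g (at x) w + frechet_derivative f (at x) w * g x)) (at x)"
      if "x \<in> S" for x
      using has_derivative_transform_within_open[OF has_derivative_mult[OF fd_at_S[OF S that smooth_diff[OF fg(1)]]
          fd_at_S[OF S that smooth_diff[OF fg(2)]]] S that] fg(3) by auto
    have "h differentiable_on S"
      using d by (meson differentiable_at_imp_differentiable_on differentiable_def)
    moreover have "\<forall>x\<in>S. frechet_derivative h (at x) v =
       (\<Sum>h\<leftarrow>[\<lambda>x. f x * frechet_derivative g (at x) v, \<lambda>x. frechet_derivative f (at x) v * g x]. h x)" for v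
      using fd_eqI[OF d] by simp
    moreover have "P (\<lambda>x. f x * frechet_derivative g (at x) v)" "P (\<lambda>x. frechet_derivative f (at x) v * g x)" for v
      unfolding P_def using fg smooth_deriv by blast+
    ultimately show "h differentiable_on S \<and> (\<forall>v. \<exists>l. (\<forall>h\<in>set l. P h \<or> smooth_on S h) \<and>
             (\<forall>x\<in>S. frechet_derivative h (at x) v = (\<Sum>h\<leftarrow>l. h x)))"
      by (intro step_helper[where L="\<lambda>v. [\<lambda>x. f x * frechet_derivative g (at x) v, \<lambda>x. frechet_derivative f (at x) v * g x]"]) auto
  qed
qed




lemma fd_real_scale:
  fixes a :: "real \<Rightarrow> real"
  assumes "(a has_derivative D) (at t)"
  shows "D w = D 1 * w"
proof -
  have bl: "bounded_linear D" using assms has_derivative_bounded_linear by blast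
  have "D w = D (w *\<^sub>R 1)" by simp
  also have "\<dots> = w *\<^sub>R D 1" by (rule linear_scale[OF bounded_linear.linear[OF bl]])
  finally show ?thesis by (simp add: mult.commute)
qed




lemma smooth_compose:
  fixes a :: "real \<Rightarrow> real" and u :: "'a::real_normed_vector \<Rightarrow> real"
  assumes S: "open S" and T: "open T" and a: "smooth_on T a" and u: "smooth_on S u" and uST: "\<And>x. x \<in> S \<Longrightarrow> u x \<in> T"
  shows "smooth_on S (\<lambda>x. a (u x))"
proof -
  define P where "P h \<longleftrightarrow> (\<exists>a b. smooth_on T a \<and> smooth_on S b \<and> (\<forall>x\<in>S. h x = a (u x) * b x))" for h :: "'a \<Rightarrow> real"
  have "P (\<lambda>x. a (u x))" using a smooth_const[of S "1::real"] unfolding P_def by (intro exI[of _ a] exI[of _ "\<lambda>x. 1"]) simp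
  then show ?thesis
  proof (rule smooth_coinduct_sum[OF S])
    fix h assume "P h"
    then obtain a b where ab: "smooth_on T a" "smooth_on S b" "\<forall>x\<in>S. h x = a (u x) * b x" unfolding P_def by blast
    have au: "((\<lambda>x. a (u x)) has_derivative (\<lambda>w. frechet_derivative a (at (u x)) (frechet_derivative u (at x) w))) (at x)"
      if "x \<in> S" for x
      using diff_chain_at[OF fd_at_S[OF S that smooth_diff[OF u]] fd_at_S[OF T uST[OF that] smooth_diff[OF ab(1)]]]
      unfolding o_def .
    have d: "(h has_derivative (\<lambda>w. a (u x) * frechet_derivative b (at x) w + frechet_derivative a (at (u x)) (frechet_derivative u (at x) w) * b x)) (at x)"
      if "x \<in> S" for x
      using has_derivative_transform_within_open[OF has_derivative_mult[OF au[OF that]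
          fd_at_S[OF S that smooth_diff[OF ab(2)]]] S that] ab(3) by auto
    have "h differentiable_on S"
      using d by (meson differentiable_at_imp_differentiable_on differentiable_def)
    moreover have sc: "frechet_derivative a (at (u x)) (frechet_derivative u (at x) v) = 
        frechet_derivative a (at (u x)) 1 * frechet_derivative u (at x) v" if "x \<in> S" for x v
      using fd_real_scale[OF fd_at_S[OF T uST[OF that] smooth_diff[OF ab(1)]]] .
    moreover have "\<forall>x\<in>S. frechet_derivative h (at x) v =
       (\<Sum>h\<leftarrow>[\<lambda>x. a (u x) * frechet_derivative b (at x) v, 
              \<lambda>x. frechet_derivative a (at (u x)) 1 * (frechet_derivative u (at x) v * b x)]. h x)" for v
    proof
      fix x assume x: "x \<in> S"
      have "frechet_derivative h (at x) v = a (u x) * frechet_derivative b (at x) v + frechet_derivative a (at (u x)) (frechet_derivative u (at x) v) * b x"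
        by (rule fd_eqI[OF d[OF x]])
      also have "\<dots> = a (u x) * frechet_derivative b (at x) v + frechet_derivative a (at (u x)) 1 * (frechet_derivative u (at x) v * b x)"
        unfolding sc[OF x] by (simp only: mult.assoc)
      finally show "frechet_derivative h (at x) v = (\<Sum>h\<leftarrow>[\<lambda>x. a (u x) * frechet_derivative b (at x) v, 
              \<lambda>x. frechet_derivative a (at (u x)) 1 * (frechet_derivative u (at x) v * b x)]. h x)" by simp
    qed
    moreover have "P (\<lambda>x. a (u x) * frechet_derivative b (at x) v)" for v
      unfolding P_def using ab smooth_deriv[OF ab(2)]
      by (intro exI[of _ a] exI[of _ "\<lambda>x. frechet_derivative b (at x) v"]) simp
    moreover have "P (\<lambda>x. frechet_derivative a (at (u x)) 1 * (frechet_derivative u (at x) v * b x))" for v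
      unfolding P_def using smooth_deriv[OF ab(1)] smooth_mult[OF S smooth_deriv[OF u] ab(2)]
      by (intro exI[of _ "\<lambda>t. frechet_derivative a (at t) 1"] exI[of _ "\<lambda>x. frechet_derivative u (at x) v * b x"]) simp
    ultimately show "h differentiable_on S \<and> (\<forall>v. \<exists>l. (\<forall>h\<in>set l. P h \<or> smooth_on S h) \<and>
             (\<forall>x\<in>S. frechet_derivative h (at x) v = (\<Sum>h\<leftarrow>l. h x)))"
      by (intro step_helper[where L="\<lambda>v. [\<lambda>x. a (u x) * frechet_derivative b (at x) v, \<lambda>x. frechet_derivative a (at (u x)) 1 * (frechet_derivative u (at x) v * b x)]"]) auto
  qed
qed




lemma smooth_affine:
  fixes a :: "'a::real_inner"
  shows "smooth_on S (\<lambda>x. inner x a + c)"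
proof -
  define P where "P h \<longleftrightarrow> (\<exists>a c. h = (\<lambda>x. inner x a + c))" for h :: "'a \<Rightarrow> real"
  have "P (\<lambda>x. inner x a + c)" unfolding P_def by blast
  then show ?thesis
  proof (rule smooth_coinduct)
    fix h assume "P h"
    then obtain a c where h: "h = (\<lambda>x. inner x a + c)" unfolding P_def by blast
    have d: "(h has_derivative (\<lambda>w. inner w a)) (at x)" for x
      unfolding h by (rule has_derivative_add_const[OF has_derivative_inner_left[OF has_derivative_ident]])
    have "h differentiable_on S"
      unfolding differentiable_on_def differentiable_def using has_derivative_at_withinI[OF d] by blast
    moreover have "P (\<lambda>x. frechet_derivative h (at x) v)" for v
      unfolding P_def by (intro exI[of _ 0] exI[of _ "inner v a"]) (simp only: fd_eqI[OF d] inner_zero_right add_0)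
    ultimately show "h differentiable_on S \<and> (\<forall>v. P (\<lambda>x. frechet_derivative h (at x) v) \<or>
        smooth_on S (\<lambda>x. frechet_derivative h (at x) v))" by simp
  qed
qed




lemma smooth_seq:
  fixes d :: "nat \<Rightarrow> real \<Rightarrow> real"
  assumes S: "open S" and der: "\<And>n x. x \<in> S \<Longrightarrow> (d n has_real_derivative d (Suc n) x) (at x)"
  shows "smooth_on S (d 0)"
proof -
  define P where "P h \<longleftrightarrow> (\<exists>n c. \<forall>x\<in>S. h x = c * d n x)" for h
  have "P (d 0)" unfolding P_def by (intro exI[of _ 0] exI[of _ 1]) auto
  then show ?thesis
  proof (rule smooth_coinduct_sum[OF S])
    fix h assume "P h"
    then obtain n c where h: "\<forall>x\<in>S. h x = c * d n x" unfolding P_def by blast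
    have dd: "(h has_derivative (\<lambda>w. w * (c * d (Suc n) x))) (at x)" if "x \<in> S" for x
    proof -
      have "((\<lambda>x. c * d n x) has_real_derivative c * d (Suc n) x) (at x)"
        using der[OF that] by (auto intro!: derivative_eq_intros)
      moreover have "(\<lambda>w. w * (c * d (Suc n) x)) = (*) (c * d (Suc n) x)"
        by (rule ext) (simp add: mult.commute)
      ultimately have "((\<lambda>x. c * d n x) has_derivative (\<lambda>w. w * (c * d (Suc n) x))) (at x)"
        unfolding has_field_derivative_def by simp
      from has_derivative_transform_within_open[OF this S that] h show ?thesis by simp
    qed
    have "h differentiable_on S"
      using dd by (meson differentiable_at_imp_differentiable_on differentiable_def)
    moreover have "\<forall>x\<in>S. frechet_derivative h (at x) v = (\<Sum>h\<leftarrow>[\<lambda>x. (v * c) * d (Suc n) x]. h x)" for v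
      using fd_eqI[OF dd] by (simp add: mult.assoc)
    moreover have "P (\<lambda>x. (v * c) * d (Suc n) x)" for v unfolding P_def by blast
    ultimately show "h differentiable_on S \<and> (\<forall>v. \<exists>l. (\<forall>h\<in>set l. P h \<or> smooth_on S h) \<and>
             (\<forall>x\<in>S. frechet_derivative h (at x) v = (\<Sum>h\<leftarrow>l. h x)))"
      by (intro step_helper[where L="\<lambda>v. [\<lambda>x. (v * c) * d (Suc n) x]"]) auto
  qed
qed





lemma poly_exp_tendsto: "((\<lambda>s. poly q s * exp (- s)) \<longlongrightarrow> (0::real)) at_top"
proof -
  have eq: "poly q s * exp (- s) = (\<Sum>i\<le>degree q. coeff q i * (s ^ i / exp s))" for s
    by (simp add: poly_altdef sum_distrib_right exp_minus divide_inverse mult.assoc)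
  have "((\<lambda>s. \<Sum>i\<le>degree q. coeff q i * (s ^ i / exp s)) \<longlongrightarrow> (\<Sum>i\<le>degree q. coeff q i * 0)) at_top"
    by (intro tendsto_sum tendsto_mult tendsto_const tendsto_power_div_exp_0)
  then show ?thesis unfolding eq by simp
qed

primrec PP :: "nat \<Rightarrow> real poly" where
  "PP 0 = 1"
| "PP (Suc n) = [:0,0,1:] * (PP n - pderiv (PP n))"

definition psd :: "nat \<Rightarrow> real \<Rightarrow> real" where
  "psd n t = (if 0 < t then poly (PP n) (inverse t) * exp (- inverse t) else 0)"

lemma psd_pos_deriv:
  assumes "0 < t"
  shows "((\<lambda>t. poly (PP n) (inverse t) * exp (- inverse t)) has_real_derivative
           poly (PP (Suc n)) (inverse t) * exp (- inverse t)) (at t)"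
proof -
  have t: "t \<noteq> 0" using assms by simp
  have "((\<lambda>t. poly (PP n) (inverse t) * exp (- inverse t)) has_real_derivative
     poly (pderiv (PP n)) (inverse t) * (- (inverse t ^ 2)) * exp (- inverse t) +
     poly (PP n) (inverse t) * (exp (- inverse t) * (- (- (inverse t ^ 2))))) (at t)"
    using t by (auto intro!: derivative_eq_intros DERIV_chain2[OF poly_DERIV] simp: power2_eq_square)
  moreover have "poly (pderiv (PP n)) (inverse t) * (- (inverse t ^ 2)) * exp (- inverse t) +
     poly (PP n) (inverse t) * (exp (- inverse t) * (- (- (inverse t ^ 2)))) =
     poly (PP (Suc n)) (inverse t) * exp (- inverse t)"
    by (simp add: algebra_simps power2_eq_square)
  ultimately show ?thesis by simp
qed

lemma psd_deriv: "(psd n has_real_derivative psd (Suc n) t) (at t)"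
proof (cases "t = 0")
  case False
  show ?thesis
  proof (cases "0 < t")
    case True
    have "((\<lambda>t. poly (PP n) (inverse t) * exp (- inverse t)) has_real_derivative psd (Suc n) t) (at t)"
      using psd_pos_deriv[OF True, of n] True by (simp add: psd_def)
    then show ?thesis
      by (rule has_field_derivative_transform_within_open[where S="{0<..}"]) (use True in \<open>auto simp: psd_def\<close>)
  next
    case False
    with \<open>t \<noteq> 0\<close> have "t < 0" by simp
    have "((\<lambda>t. 0) has_real_derivative psd (Suc n) t) (at t)"
      using \<open>t < 0\<close> by (simp add: psd_def)
    then show ?thesis
      by (rule has_field_derivative_transform_within_open[where S="{..<0}"]) (use \<open>t < 0\<close> in \<open>auto simp: psd_def\<close>)
  qed
next
  case True
  have lim_r: "((\<lambda>h. psd n h / h) \<longlongrightarrow> 0) (at_right 0)"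
  proof -
    have "((\<lambda>s. poly ([:0,1:] * PP n) s * exp (- s)) \<longlongrightarrow> 0) at_top"
      by (rule poly_exp_tendsto)
    then have "((\<lambda>h. poly ([:0,1:] * PP n) (inverse h) * exp (- inverse h)) \<longlongrightarrow> 0) (at_right 0)"
      by (rule filterlim_compose[OF _ filterlim_inverse_at_top_right])
    moreover have "eventually (\<lambda>h. poly ([:0,1:] * PP n) (inverse h) * exp (- inverse h) = psd n h / h) (at_right (0::real))"
      by (rule eventually_at_right_less[THEN eventually_mono]) (auto simp: psd_def divide_inverse)
    ultimately show ?thesis by (rule Lim_transform_eventually)
  qed
  have lim_l: "((\<lambda>h. psd n h / h) \<longlongrightarrow> 0) (at_left 0)"
  proof -
    have "eventually (\<lambda>h. 0 = psd n h / h) (at_left (0::real))"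
      unfolding eventually_at_filter by (rule always_eventually) (auto simp: psd_def)
    then show ?thesis by (rule Lim_transform_eventually[OF tendsto_const])
  qed
  have "((\<lambda>h. (psd n (0 + h) - psd n 0) / h) \<longlongrightarrow> 0) (at 0)"
    using filterlim_split_at[OF lim_l lim_r] by (simp add: psd_def)
  then show ?thesis using True by (simp add: DERIV_def psd_def)
qed

definition psi :: "real \<Rightarrow> real" where "psi = psd 0"

lemma psi_eq: "psi t = (if 0 < t then exp (- inverse t) else 0)"
  by (simp add: psi_def psd_def)

lemma smooth_psi: "smooth_on UNIV psi"
  unfolding psi_def by (rule smooth_seq) (auto intro: psd_deriv)

primrec cc :: "nat \<Rightarrow> real" where
  "cc 0 = 1" | "cc (Suc n) = - real (Suc n) * cc n"

definition ind :: "nat \<Rightarrow> real \<Rightarrow> real" where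
  "ind n x = cc n * inverse x ^ Suc n"

lemma ind_deriv:
  assumes "x \<in> {0<..}" shows "(ind n has_real_derivative ind (Suc n) x) (at x)"
proof -
  have x: "x \<noteq> 0" using assms by simp
  have "((\<lambda>x. cc n * inverse x ^ Suc n) has_real_derivative 
      cc n * ((1 + real n) * (- (inverse x ^ Suc (Suc 0)) * inverse x ^ n))) (at x)"
    by (intro DERIV_cmult DERIV_power_Suc DERIV_inverse x)
  moreover have "cc n * ((1 + real n) * (- (inverse x ^ Suc (Suc 0)) * inverse x ^ n)) = ind (Suc n) x"
    by (simp add: ind_def algebra_simps)
  ultimately show ?thesis unfolding ind_def by simp
qed

lemma smooth_inverse: "smooth_on {0<..} (\<lambda>x::real. inverse x)"
proof -
  have "smooth_on {0<..} (ind 0)" by (rule smooth_seq) (auto intro: ind_deriv)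
  moreover have "ind 0 = inverse" by (auto simp: ind_def fun_eq_iff)
  ultimately show ?thesis by simp
qed




lemma smooth_sum:
  fixes f :: "'i \<Rightarrow> 'a::real_normed_vector \<Rightarrow> 'b::real_normed_vector"
  assumes S: "open S" and I: "finite I" and f: "\<And>i. i \<in> I \<Longrightarrow> smooth_on S (f i)"
  shows "smooth_on S (\<lambda>x. \<Sum>i\<in>I. f i x)"
  using I f
proof (induction I rule: finite_induct)
  case empty
  then show ?case using smooth_const by simp
next
  case (insert i I)
  then show ?case using smooth_add[OF S, of "f i" "\<lambda>x. \<Sum>i\<in>I. f i x"] by simp
qed

lemma smooth_prod:
  fixes f :: "'i \<Rightarrow> 'a::real_normed_vector \<Rightarrow> real"
  assumes S: "open S" and I: "finite I" and f: "\<And>i. i \<in> I \<Longrightarrow> smooth_on S (f i)"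
  shows "smooth_on S (\<lambda>x. \<Prod>i\<in>I. f i x)"
  using I f
proof (induction I rule: finite_induct)
  case empty
  then show ?case using smooth_const by simp
next
  case (insert i I)
  then show ?case using smooth_mult[OF S, of "f i" "\<lambda>x. \<Prod>i\<in>I. f i x"] by simp
qed

lemma smooth_power:
  fixes f :: "'a::real_normed_vector \<Rightarrow> real"
  assumes S: "open S" and f: "smooth_on S f"
  shows "smooth_on S (\<lambda>x. f x ^ n)"
proof (induction n)
  case 0
  then show ?case using smooth_const by simp
next
  case (Suc n)
  then show ?case using smooth_mult[OF S f Suc] by simp
qed

lemma smooth_cmult:
  fixes f :: "'a::real_normed_vector \<Rightarrow> real"
  assumes S: "open S" and f: "smooth_on S f"
  shows "smooth_on S (\<lambda>x. c * f x)"
  using smooth_mult[OF S smooth_const f] by simp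

lemma smooth_diff_fun:
  fixes f g :: "'a::real_normed_vector \<Rightarrow> real"
  assumes S: "open S" and "smooth_on S f" "smooth_on S g"
  shows "smooth_on S (\<lambda>x. f x - g x)"
  using smooth_add[OF S assms(2) smooth_cmult[OF S assms(3), of "-1"]] by simp

definition Hs :: "real \<Rightarrow> real" where
  "Hs t = psi t * inverse (psi t + psi (1 - t))"

lemma psi_nonneg: "0 \<le> psi t" by (simp add: psi_eq)
lemma psi_pos: "0 < t \<Longrightarrow> 0 < psi t" by (simp add: psi_eq)
lemma psi_zero: "t \<le> 0 \<Longrightarrow> psi t = 0" by (simp add: psi_eq)

lemma psi_sum_pos: "0 < psi t + psi (1 - t)"
proof (cases "0 < t")
  case True then show ?thesis using psi_pos[of t] psi_nonneg[of "1 - t"] by simp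
next
  case False then show ?thesis using psi_pos[of "1 - t"] psi_nonneg[of t] by simp
qed

lemma smooth_Hs: "smooth_on UNIV Hs"
proof -
  have a1: "smooth_on UNIV (\<lambda>t::real. inner t (-1) + 1)" by (rule smooth_affine)
  have "smooth_on UNIV (\<lambda>t::real. psi (inner t (-1) + 1))"
    by (rule smooth_compose[OF open_UNIV open_UNIV smooth_psi a1]) auto
  then have p2: "smooth_on UNIV (\<lambda>t::real. psi (1 - t))" by simp
  have u: "smooth_on UNIV (\<lambda>t. psi t + psi (1 - t))" by (rule smooth_add[OF open_UNIV smooth_psi p2])
  have "smooth_on UNIV (\<lambda>t. inverse (psi t + psi (1 - t)))"
    by (rule smooth_compose[OF open_UNIV _ smooth_inverse u]) (auto intro: psi_sum_pos)
  from smooth_mult[OF open_UNIV smooth_psi this] show ?thesis unfolding Hs_def[abs_def] .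
qed

lemma Hs_zero: "t \<le> 0 \<Longrightarrow> Hs t = 0" by (simp add: Hs_def psi_zero)
lemma Hs_one: "1 \<le> t \<Longrightarrow> Hs t = 1"
  using psi_pos[of t] by (simp add: Hs_def psi_zero)
lemma Hs_bounds: "0 \<le> Hs t \<and> Hs t \<le> 1"
proof -
  have p: "0 < psi t + psi (1 - t)" by (rule psi_sum_pos)
  have "0 \<le> Hs t" unfolding Hs_def using p psi_nonneg by simp
  moreover have "Hs t \<le> 1" unfolding Hs_def using p psi_nonneg[of "1 - t"]
    by (simp add: divide_inverse[symmetric] divide_le_eq_1)
  ultimately show ?thesis by simp
qed

definition bmp :: "'y::euclidean_space \<Rightarrow> real \<Rightarrow> 'y \<Rightarrow> real" where
  "bmp c r y = Hs ((\<Sum>b\<in>Basis. (inner y b + - inner c b) * (inner y b + - inner c b)) * (- inverse (3 * r\<^sup>2)) + 4 / 3)"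

lemma sq_sum_norm: "(\<Sum>b\<in>Basis. (inner y b + - inner c b) * (inner y b + - inner c b)) = (norm (y - c))\<^sup>2"
  for y c :: "'y::euclidean_space"
proof -
  have "(norm (y - c))\<^sup>2 = (\<Sum>b\<in>Basis. ((y - c) \<bullet> b) * ((y - c) \<bullet> b))"
    by (simp only: power2_norm_eq_inner euclidean_inner[of "y - c" "y - c"])
  then show ?thesis by (simp add: inner_diff_left)
qed

lemma smooth_bmp: "smooth_on UNIV (bmp c r)"
proof -
  have "smooth_on UNIV (\<lambda>y. \<Sum>b\<in>Basis. (inner y b + - inner c b) * (inner y b + - inner c b))"
    by (intro smooth_sum smooth_mult smooth_affine) auto
  then have "smooth_on UNIV (\<lambda>y. (\<Sum>b\<in>Basis. (inner y b + - inner c b) * (inner y b + - inner c b)) * (- inverse (3 * r\<^sup>2)) + 4 / 3)"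
    by (intro smooth_add smooth_mult smooth_const) auto
  then show ?thesis unfolding bmp_def[abs_def]
    by (intro smooth_compose[OF open_UNIV open_UNIV smooth_Hs]) auto
qed

lemma bmp_one:
  assumes "0 < r" "norm (y - c) \<le> r" shows "bmp c r y = 1"
proof -
  have "(norm (y - c))\<^sup>2 \<le> r\<^sup>2" using assms by (simp add: power_mono)
  then have "1 \<le> (norm (y - c))\<^sup>2 * (- inverse (3 * r\<^sup>2)) + 4 / 3"
    using assms(1) by (simp add: field_simps)
  then show ?thesis unfolding bmp_def sq_sum_norm by (rule Hs_one)
qed

lemma bmp_zero:
  assumes "0 < r" "2 * r \<le> norm (y - c)" shows "bmp c r y = 0"
proof -
  have "(2 * r)\<^sup>2 \<le> (norm (y - c))\<^sup>2" using assms by (intro power_mono) auto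
  then have "(norm (y - c))\<^sup>2 * (- inverse (3 * r\<^sup>2)) + 4 / 3 \<le> 0"
    using assms(1) by (simp add: field_simps power2_eq_square)
  then show ?thesis unfolding bmp_def sq_sum_norm by (rule Hs_zero)
qed

lemma bmp_bounds: "0 \<le> bmp c r y \<and> bmp c r y \<le> 1"
  unfolding bmp_def using Hs_bounds by blast

definition gam :: "'y::euclidean_space set \<Rightarrow> real \<Rightarrow> 'y \<Rightarrow> real" where
  "gam Cs r y = 1 - (\<Prod>c\<in>Cs. (1 - bmp c r y))"

lemma bump_exists:
  fixes K D :: "'y::euclidean_space set"
  assumes K: "compact K" and D: "closed D" and KD: "K \<inter> D = {}"
  shows "\<exists>(\<gamma>::'y \<Rightarrow> real) O1 C. smooth_on UNIV \<gamma> \<and> (\<forall>y. 0 \<le> \<gamma> y \<and> \<gamma> y \<le> 1) \<and>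
     open O1 \<and> K \<subseteq> O1 \<and> (\<forall>y\<in>O1. \<gamma> y = 1) \<and>
     compact C \<and> D \<inter> C = {} \<and> (\<forall>y. y \<notin> C \<longrightarrow> \<gamma> y = 0)"
proof -
  obtain \<delta> where \<delta>: "\<delta> > 0" "\<forall>x\<in>K. \<forall>y\<in>D. \<delta> \<le> dist x y"
    using separate_compact_closed[OF K D KD] by blast
  define r where "r = \<delta> / 3"
  have r: "0 < r" using \<delta> by (simp add: r_def)
  obtain Cs where Cs: "Cs \<subseteq> K" "finite Cs" "K \<subseteq> (\<Union>c\<in>Cs. ball c r)"
    using compactE_image[OF K, of K "\<lambda>c. ball c r"] r by force
  define \<gamma> where "\<gamma> = gam Cs r"
  define O1 where "O1 = (\<Union>c\<in>Cs. ball c r)"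
  define C where "C = (\<Union>c\<in>Cs. cball c (2 * r))"
  have sm: "smooth_on UNIV \<gamma>"
    unfolding \<gamma>_def gam_def[abs_def]
    by (intro smooth_diff_fun smooth_const smooth_prod smooth_bmp Cs(2)) auto
  have bnd: "0 \<le> \<gamma> y \<and> \<gamma> y \<le> 1" for y
  proof -
    have "0 \<le> (\<Prod>c\<in>Cs. (1 - bmp c r y))" by (intro prod_nonneg) (use bmp_bounds in auto)
    moreover have "(\<Prod>c\<in>Cs. (1 - bmp c r y)) \<le> 1" by (intro prod_le_1) (use bmp_bounds in auto)
    ultimately show ?thesis by (simp add: \<gamma>_def gam_def)
  qed
  have one: "\<gamma> y = 1" if yO: "y \<in> O1" for y
  proof -
    obtain c where c: "c \<in> Cs" "y \<in> ball c r" using yO unfolding O1_def by blast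
    have "bmp c r y = 1" using c r by (intro bmp_one) (auto simp: dist_norm norm_minus_commute)
    then have "(\<Prod>c\<in>Cs. (1 - bmp c r y)) = 0" using c Cs(2) by (intro prod_zero) auto
    then show ?thesis by (simp add: \<gamma>_def gam_def)
  qed
  have zero: "\<gamma> y = 0" if "y \<notin> C" for y
  proof -
    have "bmp c r y = 0" if "c \<in> Cs" for c
      using \<open>y \<notin> C\<close> that r by (intro bmp_zero) (auto simp: C_def dist_norm norm_minus_commute)
    then show ?thesis by (simp add: \<gamma>_def gam_def)
  qed
  have "compact C" unfolding C_def using Cs(2) by (intro compact_UN) auto
  moreover have "D \<inter> C = {}"
  proof -
    have "y \<notin> cball c (2 * r)" if "y \<in> D" "c \<in> Cs" for y c
    proof -
      have "\<delta> \<le> dist c y" using \<delta>(2) that Cs(1) by auto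
      then show ?thesis using r by (simp add: r_def)
    qed
    then show ?thesis unfolding C_def by auto
  qed
  moreover have "open O1" "K \<subseteq> O1" unfolding O1_def using Cs by auto
  ultimately have "smooth_on UNIV \<gamma> \<and> (\<forall>y. 0 \<le> \<gamma> y \<and> \<gamma> y \<le> 1) \<and>
     open O1 \<and> K \<subseteq> O1 \<and> (\<forall>y\<in>O1. \<gamma> y = 1) \<and>
     compact C \<and> D \<inter> C = {} \<and> (\<forall>y. y \<notin> C \<longrightarrow> \<gamma> y = 0)"
    using sm bnd one zero by blast
  then show ?thesis by blast
qed





lemma CM1:
  fixes f g :: "'a \<Rightarrow> 'b::topological_space"
  assumes f: "f \<in> borel_measurable (completion M)" and ae: "AE x in completion M. f x = g x"
  shows "g \<in> borel_measurable (completion M)"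
proof (rule measurableI)
  fix A :: "'b set" assume A: "A \<in> sets borel"
  have fA: "f -` A \<inter> space (completion M) \<in> sets (completion M)" using f A by (rule measurable_sets)
  show "g -` A \<inter> space (completion M) \<in> sets (completion M)"
  proof (rule completion.in_sets_AE[OF _ fA])
    show "AE x in completion M. (x \<in> f -` A \<inter> space (completion M)) = (x \<in> g -` A \<inter> space (completion M))"
      using ae by eventually_elim auto
  qed auto
qed auto

lemma CM2:
  fixes f g :: "'a \<Rightarrow> real"
  assumes ae: "AE x in completion M. f x = g x"
  shows "integral\<^sup>L (completion M) f = integral\<^sup>L (completion M) g"
proof (cases "f \<in> borel_measurable (completion M)")
  case True
  then have "g \<in> borel_measurable (completion M)" using CM1 ae by blast
  then show ?thesis using True ae by (intro integral_cong_AE) auto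
next
  case False
  have ae': "AE x in completion M. g x = f x" using ae by eventually_elim simp
  have "g \<notin> borel_measurable (completion M)" using CM1[OF _ ae'] False by blast
  then have "\<not> integrable (completion M) g" "\<not> integrable (completion M) f"
    using False by (auto dest: borel_measurable_integrable)
  then show ?thesis by (simp add: not_integrable_integral_eq)
qed



lemma dom_null:
  assumes eq: "sets N = sets M" and le: "\<And>A. A \<in> sets M \<Longrightarrow> emeasure N A \<le> emeasure M A"
    and Z: "Z \<in> null_sets M"
  shows "Z \<in> null_sets N"
  using le[of Z] Z eq by (auto simp: null_sets_def)

lemma dom_AE:
  assumes eq: "sets N = sets M" and le: "\<And>A. A \<in> sets M \<Longrightarrow> emeasure N A \<le> emeasure M A"
    and ae: "AE x in M. P x"
  shows "AE x in N. P x"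
proof -
  obtain Z where Z: "Z \<in> null_sets M" "{x\<in>space M. \<not> P x} \<subseteq> Z" using ae by (auto elim!: AE_E)
  have ZN: "Z \<in> null_sets N" by (rule dom_null[OF eq le Z(1)])
  have sp: "space N = space M" using eq by (rule sets_eq_imp_space_eq)
  show ?thesis by (rule AE_I'[OF ZN]) (use Z(2) sp in simp)
qed

lemma dom_AE_completion:
  assumes eq: "sets N = sets M" and le: "\<And>A. A \<in> sets M \<Longrightarrow> emeasure N A \<le> emeasure M A"
    and ae: "AE x in completion M. P x"
  shows "AE x in completion N. P x"
  using dom_AE[OF eq le] ae by (simp add: AE_completion_iff)



lemma dom_sets_completion:
  assumes eq: "sets N = sets M" and le: "\<And>A. A \<in> sets M \<Longrightarrow> emeasure N A \<le> emeasure M A"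
    and A: "A \<in> sets (completion M)"
  shows "A \<in> sets (completion N)"
proof -
  obtain S B B' where SB: "A = S \<union> B" "B \<subseteq> B'" "B' \<in> null_sets M" "S \<in> sets M"
    using A by (rule sets_completionE)
  have "B' \<in> null_sets N" using dom_null[OF eq le SB(3)] .
  moreover have "S \<in> sets N" using SB(4) eq by simp
  ultimately show ?thesis using SB(1,2) by (rule_tac sets_completionI[where S=S and N=B and N'=B']) auto
qed

lemma dom_emeasure_completion:
  assumes eq: "sets N = sets M" and le: "\<And>A. A \<in> sets M \<Longrightarrow> emeasure N A \<le> emeasure M A"
    and A: "A \<in> sets (completion M)"
  shows "emeasure (completion N) A \<le> emeasure (completion M) A"
proof -
  obtain S B B' where SB: "A = S \<union> B" "B \<subseteq> B'" "B' \<in> null_sets M" "S \<in> sets M"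
    using A by (rule sets_completionE)
  have B'N: "B' \<in> null_sets N" using dom_null[OF eq le SB(3)] .
  have SN: "S \<in> sets N" using SB(4) eq by simp
  have "emeasure (completion N) A \<le> emeasure (completion N) (S \<union> B')"
    using SB B'N SN by (intro emeasure_mono) auto
  also have "\<dots> = emeasure N (S \<union> B')"
  proof -
    have "S \<union> B' \<in> sets N" using B'N SN by auto
    then show ?thesis by simp
  qed
  also have "\<dots> = emeasure N S" using SN B'N by (rule emeasure_Un_null_set)
  also have "\<dots> \<le> emeasure M S" using le SB(4) by simp
  also have "\<dots> = emeasure (completion M) S" using SB(4) by simp
  also have "\<dots> \<le> emeasure (completion M) A" using SB A by (intro emeasure_mono) auto
  finally show ?thesis .
qed

lemma dom_measurable_completion:
  assumes eq: "sets N = sets M" and le: "\<And>A. A \<in> sets M \<Longrightarrow> emeasure N A \<le> emeasure M A"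
    and f: "f \<in> completion M \<rightarrow>\<^sub>M K"
  shows "f \<in> completion N \<rightarrow>\<^sub>M K"
proof (rule measurableI)
  have sp: "space N = space M" using eq by (rule sets_eq_imp_space_eq)
  show "x \<in> space (completion N) \<Longrightarrow> f x \<in> space K" for x
    using measurable_space[OF f, of x] sp by simp
  fix A assume "A \<in> sets K"
  then have "f -` A \<inter> space (completion M) \<in> sets (completion M)" using measurable_sets[OF f] by blast
  then show "f -` A \<inter> space (completion N) \<in> sets (completion N)"
  proof -
    have "f -` A \<inter> space (completion N) = f -` A \<inter> space (completion M)" using sp by simp
    then show ?thesis using dom_sets_completion[OF eq le \<open>f -` A \<inter> space (completion M) \<in> sets (completion M)\<close>] by simp
  qed
qed






lemma space_borel_sets:
  fixes M :: "'b::topological_space measure"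
  assumes "sets M = sets borel" shows "space M = UNIV"
  using sets_eq_imp_space_eq[OF assms] by simp

lemma restr_eq:
  fixes M :: "'b::topological_space measure"
  assumes sM: "sets M = sets borel" and S: "S \<in> sets (completion M)"
  shows "measure_of UNIV (sets borel) (\<lambda>A. emeasure (completion M) (A \<inter> S)) =
         distr (density (completion M) (\<lambda>x. ennreal (indicator S x))) borel (\<lambda>x. x)"
    (is "?L = distr ?D borel _")
proof -
  have spM: "space M = UNIV" by (rule space_borel_sets[OF sM])
  have indm: "(\<lambda>x. ennreal (indicator S x)) \<in> borel_measurable (completion M)"
    using S by (intro measurable_compose[OF _ measurable_ennreal]) simp
  have idm: "(\<lambda>x. x) \<in> measurable ?D borel"
  proof (rule measurableI)
    fix A :: "'b set" assume "A \<in> sets borel"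
    then have "A \<in> sets (completion M)" using sM by simp
    then show "(\<lambda>x. x) -` A \<inter> space ?D \<in> sets ?D" by (simp add: spM)
  qed simp
  have em: "emeasure (distr ?D borel (\<lambda>x. x)) A = emeasure (completion M) (A \<inter> S)" if A: "A \<in> sets borel" for A
  proof -
    have Ac: "A \<in> sets (completion M)" using A sM by simp
    have "emeasure (distr ?D borel (\<lambda>x. x)) A = emeasure ?D A"
      using A idm by (simp add: emeasure_distr spM)
    also have "\<dots> = (\<integral>\<^sup>+ x. ennreal (indicator S x) * indicator A x \<partial>completion M)"
      using indm Ac by (rule emeasure_density)
    also have "\<dots> = (\<integral>\<^sup>+ x. indicator (A \<inter> S) x \<partial>completion M)"
      by (intro nn_integral_cong) (simp add: ennreal_indicator indicator_inter_arith mult.commute)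
    also have "\<dots> = emeasure (completion M) (A \<inter> S)"
      using Ac S by (intro nn_integral_indicator) auto
    finally show ?thesis .
  qed
  have ss: "sigma_sets UNIV (sets borel) = sets (borel :: 'b measure)"
    using sets.sigma_sets_eq[of "borel :: 'b measure"] by simp
  have "?L = measure_of UNIV (sets borel) (emeasure (distr ?D borel (\<lambda>x. x)))"
    by (rule measure_of_eq) (auto simp: ss em)
  also have "\<dots> = distr ?D borel (\<lambda>x. x)"
    using measure_of_of_measure[of "distr ?D borel (\<lambda>x. x)"] by simp
  finally show ?thesis .
qed

lemma density_ind_le:
  fixes M :: "'b measure"
  assumes S: "S \<in> sets M" and B: "B \<in> sets M"
  shows "emeasure (density M (\<lambda>x. ennreal (indicator S x))) B \<le> emeasure M B"
proof -
  have "emeasure (density M (\<lambda>x. ennreal (indicator S x))) B = (\<integral>\<^sup>+ x. ennreal (indicator S x) * indicator B x \<partial>M)"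
    using S B by (intro emeasure_density) (auto intro!: measurable_compose[OF _ measurable_ennreal])
  also have "\<dots> \<le> (\<integral>\<^sup>+ x. indicator B x \<partial>M)"
    by (intro nn_integral_mono) (auto simp: indicator_def)
  also have "\<dots> = emeasure M B" using B by simp
  finally show ?thesis .
qed

lemma GL:
  fixes M :: "'b::topological_space measure" and \<phi> :: "'b \<Rightarrow> 'c::topological_space" and g :: "'c \<Rightarrow> real"
  assumes sM: "sets M = sets borel" and S: "S \<in> sets (completion M)" and \<phi>: "\<phi> \<in> borel_measurable borel"
    and g: "g \<in> borel_measurable (completion (distr M borel \<phi>))"
  shows "integral\<^sup>L (completion (distr (density (completion M) (\<lambda>x. ennreal (indicator S x))) borel \<phi>)) g
        = integral\<^sup>L (completion M) (\<lambda>x. indicator S x * g (\<phi> x))"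
proof -
  define D where "D = density (completion M) (\<lambda>x. ennreal (indicator S x))"
  define N where "N = distr D borel \<phi>"
  define Mp where "Mp = distr M borel \<phi>"
  have spM: "space M = UNIV" by (rule space_borel_sets[OF sM])
  have \<phi>M: "\<phi> \<in> M \<rightarrow>\<^sub>M borel" using \<phi> measurable_cong_sets[OF sM refl] by blast
  have \<phi>cM: "\<phi> \<in> completion M \<rightarrow>\<^sub>M borel" using \<phi>M by (rule measurable_completion)
  have sD: "sets D = sets (completion M)" unfolding D_def by simp
  have \<phi>D: "\<phi> \<in> D \<rightarrow>\<^sub>M borel" using \<phi>cM measurable_cong_sets[OF sD refl] by blast
  have sN: "sets N = sets Mp" unfolding N_def Mp_def by simp
  have le: "emeasure N A \<le> emeasure Mp A" if A: "A \<in> sets Mp" for A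
  proof -
    have A': "A \<in> sets borel" using A by (simp add: Mp_def)
    have pre: "\<phi> -` A \<inter> space M \<in> sets M" using \<phi>M A' by (rule measurable_sets)
    have "emeasure N A = emeasure D (\<phi> -` A \<inter> space D)" unfolding N_def using \<phi>D A' by (rule emeasure_distr)
    also have "\<phi> -` A \<inter> space D = \<phi> -` A \<inter> space M" by (simp add: D_def)
    also have "emeasure D (\<phi> -` A \<inter> space M) \<le> emeasure (completion M) (\<phi> -` A \<inter> space M)"
      unfolding D_def using S pre by (intro density_ind_le) auto
    also have "\<dots> = emeasure M (\<phi> -` A \<inter> space M)" using pre by simp
    also have "\<dots> = emeasure Mp A" unfolding Mp_def using \<phi>M A' by (rule emeasure_distr[symmetric])
    finally show ?thesis .
  qed
  obtain g' where g': "g' \<in> borel_measurable Mp" and ae: "AE x in Mp. g x = g' x"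
    using completion_ex_borel_measurable_real[OF g[folded Mp_def]] by blast
  have g'b: "g' \<in> borel_measurable borel" using g' measurable_cong_sets[of Mp borel] by (simp add: Mp_def)
  have "integral\<^sup>L (completion N) g = integral\<^sup>L (completion N) g'"
    by (rule CM2) (rule dom_AE_completion[OF sN le AE_completion[OF ae]])
  also have "\<dots> = integral\<^sup>L N g'"
    using g'b by (intro integral_completion) (simp add: N_def)
  also have "\<dots> = integral\<^sup>L D (\<lambda>x. g' (\<phi> x))"
    unfolding N_def using \<phi>D g'b by (rule integral_distr)
  also have "\<dots> = integral\<^sup>L (completion M) (\<lambda>x. indicator S x *\<^sub>R g' (\<phi> x))"
    unfolding D_def
  proof (rule integral_density)
    show "(\<lambda>x. g' (\<phi> x)) \<in> borel_measurable (completion M)" using \<phi>cM g'b by (rule measurable_compose)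
    show "(\<lambda>x. indicator S x :: real) \<in> borel_measurable (completion M)" using S by simp
  qed auto
  also have "\<dots> = integral\<^sup>L (completion M) (\<lambda>x. indicator S x * g (\<phi> x))"
  proof (rule CM2)
    have "AE x in M. g (\<phi> x) = g' (\<phi> x)" using AE_distrD[OF \<phi>M ae[unfolded Mp_def]] .
    then show "AE x in completion M. indicator S x *\<^sub>R g' (\<phi> x) = indicator S x * g (\<phi> x)"
      by (rule AE_completion[THEN eventually_mono]) simp
  qed
  finally show ?thesis unfolding N_def D_def .
qed




lemma smooth_cont: "smooth_on UNIV f \<Longrightarrow> continuous_on UNIV f"
  by (intro differentiable_imp_continuous_on smooth_diff)

lemma fd_lin:
  fixes g :: "'y::euclidean_space \<Rightarrow> real"
  assumes g: "smooth_on UNIV g"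
  shows "frechet_derivative g (at y) w = (\<Sum>b\<in>Basis. (w \<bullet> b) * frechet_derivative g (at y) b)"
proof -
  have "(g has_derivative frechet_derivative g (at y)) (at y)"
    using fd_at_S[OF open_UNIV _ smooth_diff[OF g]] by simp
  then have lin: "linear (frechet_derivative g (at y))"
    using has_derivative_linear by blast
  have "frechet_derivative g (at y) w = frechet_derivative g (at y) (\<Sum>b\<in>Basis. (w \<bullet> b) *\<^sub>R b)"
    by (simp add: euclidean_representation)
  also have "\<dots> = (\<Sum>b\<in>Basis. (w \<bullet> b) *\<^sub>R frechet_derivative g (at y) b)"
    using lin by (simp add: linear_sum linear_scale)
  finally show ?thesis by simp
qed

lemma fd_cont:
  fixes g :: "'y::euclidean_space \<Rightarrow> real"
  assumes g: "smooth_on UNIV g"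
  shows "continuous_on UNIV (\<lambda>p. frechet_derivative g (at (fst p)) (snd p))"
proof -
  have c: "continuous_on UNIV (\<lambda>y. frechet_derivative g (at y) b)" for b
    using smooth_cont[OF smooth_deriv[OF g]] .
  have c2: "continuous_on UNIV (\<lambda>p::'y \<times> 'y. frechet_derivative g (at (fst p)) b)" for b
    using continuous_on_compose2[OF c[of b] continuous_on_fst[OF continuous_on_id]] by simp
  have cs: "continuous_on UNIV (\<lambda>p::'y \<times> 'y. \<Sum>b\<in>Basis. (snd p \<bullet> b) * frechet_derivative g (at (fst p)) b)"
    by (intro continuous_on_sum continuous_on_mult c2 continuous_on_inner continuous_on_snd continuous_on_id continuous_on_const)
  have eq: "(\<lambda>p::'y \<times> 'y. frechet_derivative g (at (fst p)) (snd p)) =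
      (\<lambda>p. \<Sum>b\<in>Basis. (snd p \<bullet> b) * frechet_derivative g (at (fst p)) b)"
    by (rule ext) (rule fd_lin[OF g])
  show ?thesis unfolding eq by (rule cs)
qed

lemma test_smooth: "test_field U \<theta> \<Longrightarrow> smooth_on UNIV \<theta>"
  by (simp add: test_field_def)

lemma pd_cont:
  fixes \<theta> :: "'a::euclidean_space \<Rightarrow> 'a"
  assumes t: "test_field U \<theta>"
  shows "continuous_on UNIV (\<lambda>z::'a \<times> ('a \<Rightarrow>\<^sub>L 'a). proj_div \<theta> (fst z) (snd z))"
proof -
  have c: "continuous_on UNIV (\<lambda>x. frechet_derivative \<theta> (at x) b)" for b
    using smooth_cont[OF smooth_deriv[OF test_smooth[OF t]]] .
  have c2: "continuous_on UNIV (\<lambda>z::'a \<times> ('a \<Rightarrow>\<^sub>L 'a). frechet_derivative \<theta> (at (fst z)) b)" for b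
    using continuous_on_compose2[OF c[of b] continuous_on_fst[OF continuous_on_id]] by simp
  have "continuous_on UNIV (\<lambda>z::'a \<times> ('a \<Rightarrow>\<^sub>L 'a). \<Sum>b\<in>Basis. inner (blinfun_apply (snd z) (frechet_derivative \<theta> (at (fst z)) b)) b)"
    by (intro continuous_on_sum continuous_on_inner blinfun.continuous_on c2 continuous_on_snd continuous_on_id continuous_on_const)
  then show ?thesis unfolding proj_div_def .
qed

lemma adm_one: "admissible_gamma (\<lambda>y::'y::euclidean_space. 1::real)"
  unfolding admissible_gamma_def using smooth_const by simp

lemma adm_prod:
  fixes g \<gamma> :: "'y::euclidean_space \<Rightarrow> real"
  assumes g: "admissible_gamma g" and \<gamma>: "smooth_on UNIV \<gamma>" and C: "compact C"
    and z: "\<And>y. y \<notin> C \<Longrightarrow> \<gamma> y = 0"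
  shows "admissible_gamma (\<lambda>y. g y * \<gamma> y ^ Suc k)"
proof -
  have gs: "smooth_on UNIV g" using g by (simp add: admissible_gamma_def)
  have sm: "smooth_on UNIV (\<lambda>y. g y * \<gamma> y ^ Suc k)"
    by (rule smooth_mult[OF open_UNIV gs smooth_power[OF open_UNIV \<gamma>]])
  have sub: "{y. frechet_derivative (\<lambda>y. g y * \<gamma> y ^ Suc k) (at y) \<noteq> (\<lambda>_. 0)} \<subseteq> C"
  proof
    fix y assume y: "y \<in> {y. frechet_derivative (\<lambda>y. g y * \<gamma> y ^ Suc k) (at y) \<noteq> (\<lambda>_. 0)}"
    show "y \<in> C"
    proof (rule ccontr)
      assume "y \<notin> C"
      have "open (- C)" using compact_imp_closed[OF C] by auto
      then have "frechet_derivative (\<lambda>y. g y * \<gamma> y ^ Suc k) (at y) = frechet_derivative (\<lambda>y. 0::real) (at y)"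
        using \<open>y \<notin> C\<close> z by (intro fd_local[of "- C"]) auto
      then show False using y by simp
    qed
  qed
  have "closure {y. frechet_derivative (\<lambda>y. g y * \<gamma> y ^ Suc k) (at y) \<noteq> (\<lambda>_. 0)} \<subseteq> C"
    using closure_minimal[OF sub compact_imp_closed[OF C]] .
  then have "compact (closure {y. frechet_derivative (\<lambda>y. g y * \<gamma> y ^ Suc k) (at y) \<noteq> (\<lambda>_. 0)})"
    using C by (meson bounded_subset closure_subset compact_closure compact_imp_bounded sub)
  with sm show ?thesis unfolding admissible_gamma_def by simp
qed

lemma test_cont: "test_field U \<theta> \<Longrightarrow> continuous_on UNIV \<theta>"
  using smooth_cont test_smooth by blast

lemma test_zero: "test_field U \<theta> \<Longrightarrow> x \<notin> support_of \<theta> \<Longrightarrow> \<theta> x = 0"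
  unfolding support_of_def using closure_subset[of "{x. \<theta> x \<noteq> 0}"] by auto

lemma test_bound:
  assumes t: "test_field U \<theta>"
  obtains B where "B > 0" "\<And>x. norm (\<theta> x) \<le> B"
proof -
  have cpt: "compact (support_of \<theta>)" using t by (simp add: test_field_def)
  have "compact (\<theta> ` support_of \<theta>)"
    using compact_continuous_image[OF continuous_on_subset[OF test_cont[OF t]] cpt] by simp
  then obtain B where B: "B > 0" "\<And>x. x \<in> support_of \<theta> \<Longrightarrow> norm (\<theta> x) \<le> B"
    using compact_imp_bounded bounded_pos by (metis image_eqI)
  have "norm (\<theta> x) \<le> B" for x
    using B test_zero[OF t, of x] by (cases "x \<in> support_of \<theta>") auto
  with B(1) show ?thesis using that by blast
qed





lemma fst_borel: "fst \<in> borel_measurable (borel :: ('a::topological_space \<times> 'b::topological_space) measure)"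
  by (rule borel_measurable_continuous_onI[OF continuous_on_fst[OF continuous_on_id]])

lemma AE_weight_fst:
  fixes V :: "('a::euclidean_space \<times> ('a \<Rightarrow>\<^sub>L 'a)) measure"
  assumes sV: "sets V = sets borel" and ae: "AE x in completion (weight V). P x"
  shows "AE z in completion V. P (fst z)"
proof -
  have fm: "fst \<in> V \<rightarrow>\<^sub>M borel" using fst_borel measurable_cong_sets[OF sV refl] by blast
  have "AE x in distr V borel fst. P x" using ae unfolding weight_def by (simp add: AE_completion_iff)
  from AE_distrD[OF fm this] show ?thesis by (rule AE_completion)
qed

lemma cont_meas:
  fixes h :: "'a::topological_space \<Rightarrow> 'b::topological_space"
  assumes "sets M = sets borel" "continuous_on UNIV h"
  shows "h \<in> borel_measurable (completion M)"
proof -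
  have "h \<in> borel_measurable M"
    using borel_measurable_continuous_onI[OF assms(2)] measurable_cong_sets[OF assms(1) refl] by blast
  then show ?thesis by (rule measurable_completion)
qed

lemma pd_zero:
  assumes t: "test_field U \<theta>" and x: "x \<notin> U"
  shows "proj_div \<theta> x P = 0"
proof -
  have sub: "support_of \<theta> \<subseteq> U" using t by (simp add: test_field_def)
  have cl: "closed (support_of \<theta>)" by (simp add: support_of_def)
  have xs: "x \<in> - support_of \<theta>" using x sub by auto
  have "frechet_derivative \<theta> (at x) = frechet_derivative (\<lambda>y. 0) (at x)"
    using xs cl test_zero[OF t] by (intro fd_local[of "- support_of \<theta>"]) auto
  then show ?thesis by (simp add: proj_div_def)
qed

lemma fd_zero:
  fixes g :: "'y::euclidean_space \<Rightarrow> real"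
  assumes "smooth_on UNIV g" shows "frechet_derivative g (at y) 0 = 0"
  using fd_lin[OF assms, of y 0] by simp

lemma Key:
  fixes V :: "('a::euclidean_space \<times> ('a \<Rightarrow>\<^sub>L 'a)) measure" and \<mu> :: "'a measure"
    and \<eta> :: "'a \<Rightarrow> 'a" and f :: "'a \<Rightarrow> 'y::euclidean_space" and F :: "'a \<Rightarrow> ('a \<Rightarrow>\<^sub>L 'y)"
    and \<gamma> g :: "'y \<Rightarrow> real"
  assumes sV: "sets V = sets borel"
    and rad: "radon_on U \<mu>"
    and aen: "AE x in \<mu>. norm (\<eta> x) = 1" and \<eta>m: "\<eta> \<in> borel_measurable (completion \<mu>)"
    and fm2: "f \<in> borel_measurable (completion \<mu>)"
    and EQ: "\<forall>\<theta> \<gamma>. test_field U \<theta> \<and> admissible_gamma \<gamma> \<longrightarrow>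
              integral\<^sup>L (completion \<mu>) (\<lambda>x. \<gamma> (f x) * inner (\<theta> x) (\<eta> x))
              = integral\<^sup>L (completion V) (\<lambda>(x, P). \<gamma> (f x) * proj_div \<theta> x P)
                + integral\<^sup>L (completion (weight V))
                    (\<lambda>x. frechet_derivative \<gamma> (at (f x)) (blinfun_apply (F x) (\<theta> x)))"
    and \<gamma>s: "smooth_on UNIV \<gamma>" and \<gamma>b: "\<And>y. 0 \<le> \<gamma> y \<and> \<gamma> y \<le> 1"
    and O1: "open O1" "K \<subseteq> O1" "\<And>y. y \<in> O1 \<Longrightarrow> \<gamma> y = 1"
    and C: "compact C" "D \<inter> C = {}" "\<And>y. y \<notin> C \<Longrightarrow> \<gamma> y = 0"
    and E: "E = U \<inter> f -` {y. \<gamma> y = 1}" and Em: "E \<in> sets (completion \<mu>)"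
    and aeV: "AE x in completion (weight V). x \<in> U \<longrightarrow> f x \<in> D \<union> K"
    and t: "test_field U \<theta>" and g: "admissible_gamma g"
  shows "integral\<^sup>L (completion \<mu>) (\<lambda>x. indicator E x * (g (f x) * inner (\<theta> x) (\<eta> x)))
       = integral\<^sup>L (completion V) (\<lambda>(x, P). indicator E x * (g (f x) * proj_div \<theta> x P))
         + integral\<^sup>L (completion (weight V)) (\<lambda>x. indicator E x * frechet_derivative g (at (f x)) (blinfun_apply (F x) (\<theta> x)))"
proof -
  define gk where "gk k = (\<lambda>y. g y * \<gamma> y ^ Suc k)" for k
  have gs: "smooth_on UNIV g" using g by (simp add: admissible_gamma_def)
  have adm: "admissible_gamma (gk k)" for k
    unfolding gk_def by (rule adm_prod[OF g \<gamma>s C(1) C(3)])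
  have P1: "gk k (f x) = indicator E x * g (f x)" if "x \<in> U" "f x \<in> D \<union> K" for x k
  proof (cases "f x \<in> K")
    case True
    then have "\<gamma> (f x) = 1" using O1 by auto
    then show ?thesis using that by (simp add: gk_def E indicator_def)
  next
    case False
    then have "f x \<in> D" using that by auto
    then have "f x \<notin> C" using C(2) by auto
    then have "\<gamma> (f x) = 0" using C(3) by auto
    then show ?thesis using that by (simp add: gk_def E indicator_def)
  qed
  have P2: "frechet_derivative (gk k) (at (f x)) w = indicator E x * frechet_derivative g (at (f x)) w"
    if "x \<in> U" "f x \<in> D \<union> K" for x k w
  proof (cases "f x \<in> K")
    case True
    then have fx: "f x \<in> O1" "\<gamma> (f x) = 1" using O1 by auto
    have "frechet_derivative (gk k) (at (f x)) = frechet_derivative g (at (f x))"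
      using fx(1) O1(1,3) by (intro fd_local[of O1]) (auto simp: gk_def)
    then show ?thesis using that fx by (simp add: E indicator_def)
  next
    case False
    then have "f x \<in> D" using that by auto
    then have fx: "f x \<in> - C" using C(2) by auto
    have oC: "open (- C)" using compact_imp_closed[OF C(1)] by auto
    have "frechet_derivative (gk k) (at (f x)) = frechet_derivative (\<lambda>y. 0::real) (at (f x))"
      using fx oC C(3) by (intro fd_local[of "- C"]) (auto simp: gk_def)
    moreover have "x \<notin> E" using fx C(3) by (auto simp: E)
    ultimately show ?thesis by simp
  qed
  have aeVz: "AE z in completion V. fst z \<in> U \<longrightarrow> f (fst z) \<in> D \<union> K"
    by (rule AE_weight_fst[OF sV aeV])
  have Q1: "gk k (f x) * proj_div \<theta> x P = indicator E x * (g (f x) * proj_div \<theta> x P)"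
    if "x \<in> U \<longrightarrow> f x \<in> D \<union> K" for x k P
  proof (cases "x \<in> U")
    case True then show ?thesis using P1[of x k] that by simp
  next
    case False then show ?thesis using pd_zero[OF t False] by simp
  qed
  have Q2: "frechet_derivative (gk k) (at (f x)) (blinfun_apply (F x) (\<theta> x)) =
      indicator E x * frechet_derivative g (at (f x)) (blinfun_apply (F x) (\<theta> x))"
    if "x \<in> U \<longrightarrow> f x \<in> D \<union> K" for x k
  proof (cases "x \<in> U")
    case True then show ?thesis using P2[of x k] that by simp
  next
    case False
    have sub: "support_of \<theta> \<subseteq> U" using t by (simp add: test_field_def)
    then have "\<theta> x = 0" using False test_zero[OF t] by auto
    moreover have "smooth_on UNIV (gk k)" using adm[of k] by (simp add: admissible_gamma_def)
    ultimately show ?thesis using False fd_zero by (simp add: E)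
  qed
  define L where "L = integral\<^sup>L (completion \<mu>) (\<lambda>x. indicator E x * (g (f x) * inner (\<theta> x) (\<eta> x)))"
  define R where "R = integral\<^sup>L (completion V) (\<lambda>(x, P). indicator E x * (g (f x) * proj_div \<theta> x P))
         + integral\<^sup>L (completion (weight V)) (\<lambda>x. indicator E x * frechet_derivative g (at (f x)) (blinfun_apply (F x) (\<theta> x)))"
  have eqk: "integral\<^sup>L (completion \<mu>) (\<lambda>x. gk k (f x) * inner (\<theta> x) (\<eta> x)) = R" for k
  proof -
    have "integral\<^sup>L (completion \<mu>) (\<lambda>x. gk k (f x) * inner (\<theta> x) (\<eta> x))
        = integral\<^sup>L (completion V) (\<lambda>(x, P). gk k (f x) * proj_div \<theta> x P)
          + integral\<^sup>L (completion (weight V)) (\<lambda>x. frechet_derivative (gk k) (at (f x)) (blinfun_apply (F x) (\<theta> x)))"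
      using EQ t adm by blast
    also have "integral\<^sup>L (completion V) (\<lambda>(x, P). gk k (f x) * proj_div \<theta> x P)
        = integral\<^sup>L (completion V) (\<lambda>(x, P). indicator E x * (g (f x) * proj_div \<theta> x P))"
    proof (rule CM2)
      show "AE z in completion V. (case z of (x, P) \<Rightarrow> gk k (f x) * proj_div \<theta> x P) =
              (case z of (x, P) \<Rightarrow> indicator E x * (g (f x) * proj_div \<theta> x P))"
        using aeVz by eventually_elim (auto simp: split_beta Q1)
    qed
    also have "integral\<^sup>L (completion (weight V)) (\<lambda>x. frechet_derivative (gk k) (at (f x)) (blinfun_apply (F x) (\<theta> x)))
        = integral\<^sup>L (completion (weight V)) (\<lambda>x. indicator E x * frechet_derivative g (at (f x)) (blinfun_apply (F x) (\<theta> x)))"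
    proof (rule CM2)
      show "AE x in completion (weight V). frechet_derivative (gk k) (at (f x)) (blinfun_apply (F x) (\<theta> x)) =
          indicator E x * frechet_derivative g (at (f x)) (blinfun_apply (F x) (\<theta> x))"
        using aeV by eventually_elim (simp add: Q2)
    qed
    finally show ?thesis unfolding R_def .
  qed
  have s\<mu>: "sets \<mu> = sets borel" using rad by (simp add: radon_on_def)
  obtain Tb where Tb: "Tb > 0" "\<And>x. norm (\<theta> x) \<le> Tb" using test_bound[OF t] by blast
  define T where "T = support_of \<theta>"
  have Tc: "compact T" "T \<subseteq> U" using t by (auto simp: test_field_def T_def)
  have Tm: "T \<in> sets \<mu>" using s\<mu> compact_imp_closed[OF Tc(1)] by simp
  have Tfin: "emeasure (completion \<mu>) T < \<infinity>" using rad Tc Tm by (simp add: radon_on_def)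
  have gcont: "continuous_on UNIV g" by (rule smooth_cont[OF gs])
  obtain Mb where Mb: "Mb > 0" "\<And>y. y \<in> C \<Longrightarrow> norm (g y) \<le> Mb"
  proof -
    have "compact (g ` C)" using compact_continuous_image[OF continuous_on_subset[OF gcont] C(1)] by simp
    then obtain Mb where "Mb > 0" "\<And>z. z \<in> g ` C \<Longrightarrow> norm z \<le> Mb"
      using compact_imp_bounded bounded_pos by metis
    then show ?thesis using that by blast
  qed
  have gkb: "\<bar>gk k y\<bar> \<le> Mb" for k y
  proof (cases "y \<in> C")
    case True
    have "0 \<le> \<gamma> y ^ Suc k" "\<gamma> y ^ Suc k \<le> 1" using \<gamma>b[of y] power_le_one[of "\<gamma> y" "Suc k"] by (simp_all del: power_Suc)
    then have "\<bar>\<gamma> y ^ Suc k\<bar> \<le> 1" by simp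
    then have "\<bar>g y\<bar> * \<bar>\<gamma> y ^ Suc k\<bar> \<le> Mb * 1"
      using Mb(2)[OF True] by (intro mult_mono) auto
    then show ?thesis by (simp add: gk_def abs_mult)
  next
    case False
    then show ?thesis using C(3) Mb(1) by (simp add: gk_def)
  qed
  define w where "w x = Mb * Tb * indicator T x" for x
  have wi: "integrable (completion \<mu>) w"
    unfolding w_def using Tm Tfin by (intro integrable_mult_right integrable_real_indicator) auto
  have \<theta>m: "\<theta> \<in> borel_measurable (completion \<mu>)" by (rule cont_meas[OF s\<mu> test_cont[OF t]])
  have gkm: "(\<lambda>x. gk k (f x)) \<in> borel_measurable (completion \<mu>)" for k
  proof -
    have "smooth_on UNIV (gk k)" using adm[of k] by (simp add: admissible_gamma_def)
    then have "continuous_on UNIV (gk k)" by (rule smooth_cont)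
    then show ?thesis using measurable_compose[OF fm2 borel_measurable_continuous_onI] by blast
  qed
  have gm: "(\<lambda>x. g (f x)) \<in> borel_measurable (completion \<mu>)"
    using measurable_compose[OF fm2 borel_measurable_continuous_onI[OF gcont]] .
  have im: "(\<lambda>x. inner (\<theta> x) (\<eta> x)) \<in> borel_measurable (completion \<mu>)"
    using \<theta>m \<eta>m by (rule borel_measurable_inner)
  have LIM: "(\<lambda>k. integral\<^sup>L (completion \<mu>) (\<lambda>x. gk k (f x) * inner (\<theta> x) (\<eta> x))) \<longlonglongrightarrow> L"
    unfolding L_def
  proof (rule integral_dominated_convergence[OF _ _ wi])
    show "(\<lambda>x. indicator E x * (g (f x) * inner (\<theta> x) (\<eta> x))) \<in> borel_measurable (completion \<mu>)"
      using Em gm im by (intro borel_measurable_times) auto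
    show "(\<lambda>x. gk k (f x) * inner (\<theta> x) (\<eta> x)) \<in> borel_measurable (completion \<mu>)" for k
      using gkm im by (rule borel_measurable_times)
    show "AE x in completion \<mu>. norm (gk k (f x) * inner (\<theta> x) (\<eta> x)) \<le> w x" for k
    proof -
      have "AE x in completion \<mu>. norm (\<eta> x) = 1" using aen by (rule AE_completion)
      then show ?thesis
      proof eventually_elim
        case (elim x)
        show ?case
        proof (cases "x \<in> T")
          case True
          have "\<bar>inner (\<theta> x) (\<eta> x)\<bar> \<le> norm (\<theta> x) * norm (\<eta> x)" by (rule Cauchy_Schwarz_ineq2)
          also have "\<dots> \<le> Tb" using Tb(2)[of x] elim by simp
          finally have "\<bar>gk k (f x)\<bar> * \<bar>inner (\<theta> x) (\<eta> x)\<bar> \<le> Mb * Tb"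
            using gkb[of k "f x"] by (intro mult_mono) auto
          then show ?thesis using True by (simp add: w_def abs_mult)
        next
          case False
          then have "\<theta> x = 0" using test_zero[OF t] by (simp add: T_def)
          then show ?thesis using False by (simp add: w_def)
        qed
      qed
    qed
    show "AE x in completion \<mu>. (\<lambda>k. gk k (f x) * inner (\<theta> x) (\<eta> x)) \<longlonglongrightarrow> indicator E x * (g (f x) * inner (\<theta> x) (\<eta> x))"
    proof (rule AE_I2)
      fix x
      show "(\<lambda>k. gk k (f x) * inner (\<theta> x) (\<eta> x)) \<longlonglongrightarrow> indicator E x * (g (f x) * inner (\<theta> x) (\<eta> x))"
      proof (cases "x \<in> U")
        case False
        then have "x \<notin> T" using Tc by auto
        then have "\<theta> x = 0" using test_zero[OF t] by (simp add: T_def)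
        then show ?thesis by simp
      next
        case xU: True
        show ?thesis
        proof (cases "\<gamma> (f x) = 1")
          case True
          then have "x \<in> E" using xU by (simp add: E)
          then show ?thesis using True by (simp add: gk_def)
        next
          case False
          then have "x \<notin> E" by (simp add: E)
          have "norm (\<gamma> (f x)) < 1" using \<gamma>b[of "f x"] False by auto
          then have "(\<lambda>k. \<gamma> (f x) ^ k) \<longlonglongrightarrow> 0" by (rule LIMSEQ_power_zero)
          then have "(\<lambda>k. \<gamma> (f x) ^ Suc k) \<longlonglongrightarrow> 0" by (rule LIMSEQ_Suc)
          then have "(\<lambda>k. g (f x) * \<gamma> (f x) ^ Suc k * inner (\<theta> x) (\<eta> x)) \<longlonglongrightarrow> g (f x) * 0 * inner (\<theta> x) (\<eta> x)"
            by (intro tendsto_mult tendsto_const)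
          then show ?thesis using \<open>x \<notin> E\<close> by (simp add: gk_def)
        qed
      qed
    qed
  qed
  moreover have "(\<lambda>k. integral\<^sup>L (completion \<mu>) (\<lambda>x. gk k (f x) * inner (\<theta> x) (\<eta> x))) \<longlonglongrightarrow> R"
    unfolding eqk by (rule tendsto_const)
  ultimately have "L = R" by (rule LIMSEQ_unique)
  then show ?thesis unfolding L_def R_def .
qed




lemma id_meas_density:
  fixes M :: "'b::topological_space measure"
  assumes sM: "sets M = sets borel"
  shows "(\<lambda>x. x) \<in> density (completion M) h \<rightarrow>\<^sub>M borel"
proof (rule measurableI)
  have spM: "space M = UNIV" by (rule space_borel_sets[OF sM])
  fix A :: "'b set" assume "A \<in> sets borel"
  then have "A \<in> sets (completion M)" using sM by simp
  then show "(\<lambda>x. x) -` A \<inter> space (density (completion M) h) \<in> sets (density (completion M) h)" by (simp add: spM)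
qed simp

lemma restr_emeasure:
  fixes M :: "'b::topological_space measure"
  assumes sM: "sets M = sets borel" and S: "S \<in> sets (completion M)" and A: "A \<in> sets borel"
  shows "emeasure (distr (density (completion M) (\<lambda>x. ennreal (indicator S x))) borel (\<lambda>x. x)) A
     = emeasure (completion M) (A \<inter> S)"
proof -
  have spM: "space M = UNIV" by (rule space_borel_sets[OF sM])
  have indm: "(\<lambda>x. ennreal (indicator S x)) \<in> borel_measurable (completion M)"
    using S by (intro measurable_compose[OF _ measurable_ennreal]) simp
  have Ac: "A \<in> sets (completion M)" using A sM by simp
  have "emeasure (distr (density (completion M) (\<lambda>x. ennreal (indicator S x))) borel (\<lambda>x. x)) A
      = emeasure (density (completion M) (\<lambda>x. ennreal (indicator S x))) A"
    using A id_meas_density[OF sM] by (simp add: emeasure_distr spM)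
  also have "\<dots> = (\<integral>\<^sup>+ x. ennreal (indicator S x) * indicator A x \<partial>completion M)"
    using indm Ac by (rule emeasure_density)
  also have "\<dots> = (\<integral>\<^sup>+ x. indicator (A \<inter> S) x \<partial>completion M)"
    by (intro nn_integral_cong) (simp add: ennreal_indicator indicator_inter_arith mult.commute)
  also have "\<dots> = emeasure (completion M) (A \<inter> S)"
    using Ac S by (intro nn_integral_indicator) auto
  finally show ?thesis .
qed

lemma distr_id_borel:
  fixes M :: "'b::topological_space measure"
  assumes sM: "sets M = sets borel"
  shows "distr M borel (\<lambda>x. x) = M"
proof (rule measure_eqI)
  have idm: "(\<lambda>x. x) \<in> M \<rightarrow>\<^sub>M borel" using measurable_ident_sets[OF sM] .
  show "sets (distr M borel (\<lambda>x. x)) = sets M" using sM by simp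
  fix A assume "A \<in> sets (distr M borel (\<lambda>x. x))"
  then have A: "A \<in> sets borel" by simp
  then show "emeasure (distr M borel (\<lambda>x. x)) A = emeasure M A"
    using idm by (simp add: emeasure_distr space_borel_sets[OF sM])
qed

lemma FST:
  fixes V :: "('a::euclidean_space \<times> ('a \<Rightarrow>\<^sub>L 'a)) measure"
  assumes sV: "sets V = sets borel"
  shows "fst \<in> completion V \<rightarrow>\<^sub>M completion (weight V)"
proof (rule completion.measurable_completion2)
  have fm0: "fst \<in> V \<rightarrow>\<^sub>M borel" using fst_borel measurable_cong_sets[OF sV refl] by blast
  have "sets (weight V) = sets borel" by (simp add: weight_def)
  then have fm: "fst \<in> V \<rightarrow>\<^sub>M weight V" using fm0 measurable_cong_sets[OF refl, of "weight V" borel V] by simp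
  then show f2: "fst \<in> completion V \<rightarrow>\<^sub>M weight V" by (rule measurable_completion)
  show "null_sets (weight V) \<subseteq> null_sets (distr (completion V) (weight V) fst)"
  proof
    fix A assume A: "A \<in> null_sets (weight V)"
    have As: "A \<in> sets (weight V)" using A by auto
    have "emeasure (distr (completion V) (weight V) fst) A = emeasure (distr V (weight V) fst) A"
      using fm by (simp add: distr_completion)
    also have "\<dots> = emeasure V (fst -` A \<inter> space V)" using fm As by (rule emeasure_distr)
    also have "\<dots> = emeasure (weight V) A"
      unfolding weight_def using fst_borel measurable_cong_sets[OF sV] As
      by (subst emeasure_distr) (auto simp: weight_def)
    also have "\<dots> = 0" using A by auto
    finally show "A \<in> null_sets (distr (completion V) (weight V) fst)" using As by auto
  qed
qed

lemma int_weight: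
  fixes V :: "('a::euclidean_space \<times> ('a \<Rightarrow>\<^sub>L 'a)) measure" and k :: "'a \<Rightarrow> real"
  assumes sV: "sets V = sets borel" and k: "k \<in> borel_measurable (completion (weight V))"
  shows "integral\<^sup>L (completion (weight V)) k = integral\<^sup>L (completion V) (\<lambda>z. k (fst z))"
proof -
  have fm: "fst \<in> V \<rightarrow>\<^sub>M borel" using fst_borel measurable_cong_sets[OF sV refl] by blast
  have "integral\<^sup>L (completion (distr (density (completion V) (\<lambda>x. ennreal (indicator UNIV x))) borel fst)) k
      = integral\<^sup>L (completion V) (\<lambda>z. indicator UNIV z * k (fst z))"
  proof (rule GL[OF sV _ fst_borel])
    show "UNIV \<in> sets (completion V)" using sets.top[of "completion V"] space_borel_sets[OF sV] by simp
    show "k \<in> borel_measurable (completion (distr V borel fst))" using k by (simp add: weight_def)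
  qed
  moreover have "density (completion V) (\<lambda>x. ennreal (indicator UNIV x)) = completion V"
    using density_1[of "completion V"] by simp
  moreover have "distr (completion V) borel fst = weight V"
    using fm by (simp add: distr_completion weight_def)
  ultimately show ?thesis by simp
qed




lemma null_transfer:
  assumes eq: "sets N = sets M" and le: "\<And>A. A \<in> sets M \<Longrightarrow> emeasure N A \<le> emeasure M A"
    and A: "A \<in> null_sets (completion M)"
  shows "A \<in> null_sets (completion N)"
proof -
  have As: "A \<in> sets (completion M)" using A by auto
  have "A \<in> sets (completion N)" by (rule dom_sets_completion[OF eq le As])
  moreover have "emeasure (completion N) A \<le> emeasure (completion M) A" by (rule dom_emeasure_completion[OF eq le As])
  ultimately show ?thesis using A by (auto simp: null_sets_def)
qed

theorem mainTheorem4: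
  fixes U :: "'a::euclidean_space set" and m :: nat
    and V :: "('a \<times> ('a \<Rightarrow>\<^sub>L 'a)) measure"
    and f :: "'a \<Rightarrow> 'y::euclidean_space" and D K :: "'y set"
  assumes "1 \<le> m" and "m \<le> DIM('a)"
    and "open U"
    and "closed D" and "compact K" and "K \<inter> D = {}"
    and "varifold U m V"
    and "fv_rep U V \<mu> \<eta>"
    and "absolutely_continuous (weight V) \<mu>"
    and "gen_weakly_diff U V f"
    and "emeasure (completion (weight V)) (U - f -` (D \<union> K)) = 0"
    and "emeasure (completion (weight V)) (U \<inter> f -` K) > 0"
  shows "\<exists>W. varifold U m W \<and> partitioned_component U m V W \<and>
             emeasure (completion (weight W)) (U - f -` K) = 0 \<and>
             gen_weakly_diff U W f"
proof -
  have sV: "sets V = sets borel" and V0: "emeasure V (- (U \<times> grass m)) = 0"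
    and Vfin: "\<And>C. compact C \<Longrightarrow> C \<subseteq> U \<Longrightarrow> emeasure V (C \<times> UNIV) < \<infinity>"
    using assms(7) unfolding varifold_def by auto
  have spV: "space V = UNIV" by (rule space_borel_sets[OF sV])
  have swV: "sets (weight V) = sets borel" by (simp add: weight_def)
  have spwV: "space (weight V) = UNIV" by (simp add: weight_def)
  have fstV: "fst \<in> V \<rightarrow>\<^sub>M borel" using fst_borel measurable_cong_sets[OF sV refl] by blast
  obtain \<mu>' \<eta>' and F :: "'a \<Rightarrow> ('a \<Rightarrow>\<^sub>L 'y)" where fvr: "fv_rep U V \<mu>' \<eta>'"
    and fm1: "f \<in> borel_measurable (completion (weight V))"
    and fm2: "f \<in> borel_measurable (completion \<mu>')"
    and fin: "\<forall>C s. compact C \<and> C \<subseteq> U \<and> 0 \<le> s \<longrightarrow>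
           emeasure (completion (weight V)) (C \<inter> {x. norm (f x) > s}) < \<infinity> \<and>
           emeasure (completion \<mu>') (C \<inter> {x. norm (f x) > s}) < \<infinity>"
    and Fm: "F \<in> borel_measurable (completion (weight V))"
    and Fint: "\<forall>C s. compact C \<and> C \<subseteq> U \<and> 0 \<le> s \<longrightarrow>
              (\<integral>\<^sup>+ x. indicator (C \<inter> {x. norm (f x) \<le> s}) x * ennreal (norm (F x))
                 \<partial>completion (weight V)) < \<infinity>"
    and EQ: "\<forall>\<theta> \<gamma>. test_field U \<theta> \<and> admissible_gamma \<gamma> \<longrightarrow>
              integral\<^sup>L (completion \<mu>') (\<lambda>x. \<gamma> (f x) * inner (\<theta> x) (\<eta>' x))
              = integral\<^sup>L (completion V) (\<lambda>(x, P). \<gamma> (f x) * proj_div \<theta> x P)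
                + integral\<^sup>L (completion (weight V))
                    (\<lambda>x. frechet_derivative \<gamma> (at (f x)) (blinfun_apply (F x) (\<theta> x)))"
    using assms(10) unfolding gen_weakly_diff_def by (elim exE conjE) (rule that; assumption)
  have rad: "radon_on U \<mu>'" and \<eta>m: "\<eta>' \<in> borel_measurable (completion \<mu>')"
    and aen: "AE x in \<mu>'. norm (\<eta>' x) = 1"
    using fvr unfolding fv_rep_def by auto
  have s\<mu>: "sets \<mu>' = sets borel" and \<mu>U: "emeasure \<mu>' (- U) = 0"
    and \<mu>fin: "\<And>C. compact C \<Longrightarrow> C \<subseteq> U \<Longrightarrow> emeasure \<mu>' C < \<infinity>"
    using rad unfolding radon_on_def by auto
  have sp\<mu>: "space \<mu>' = UNIV" by (rule space_borel_sets[OF s\<mu>])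
  obtain \<gamma> :: "'y \<Rightarrow> real" and O1 C where \<gamma>s: "smooth_on UNIV \<gamma>" and \<gamma>b: "\<And>y. 0 \<le> \<gamma> y \<and> \<gamma> y \<le> 1"
    and O1: "open O1" "K \<subseteq> O1" "\<And>y. y \<in> O1 \<Longrightarrow> \<gamma> y = 1"
    and Cc: "compact C" "D \<inter> C = {}" "\<And>y. y \<notin> C \<Longrightarrow> \<gamma> y = 0"
    using bump_exists[OF assms(5) assms(4) assms(6)] by blast
  define E where "E = U \<inter> f -` {y. \<gamma> y = 1}"
  have cl\<gamma>: "closed {y. \<gamma> y = 1}" using closed_Collect_eq[OF smooth_cont[OF \<gamma>s] continuous_on_const] .
  have Ub: "U \<in> sets borel" using assms(3) by simp
  have EU: "E \<subseteq> U" by (auto simp: E_def)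
  have Ecw: "E \<in> sets (completion (weight V))"
  proof -
    have "f -` {y. \<gamma> y = 1} \<inter> space (completion (weight V)) \<in> sets (completion (weight V))"
      by (rule measurable_sets[OF fm1 borel_closed[OF cl\<gamma>]])
    moreover have "U \<in> sets (completion (weight V))" using Ub swV by simp
    ultimately have "U \<inter> (f -` {y. \<gamma> y = 1} \<inter> space (completion (weight V))) \<in> sets (completion (weight V))"
      by (rule sets.Int[rotated])
    then show ?thesis by (simp add: E_def spwV)
  qed
  have Ecm: "E \<in> sets (completion \<mu>')"
  proof -
    have "f -` {y. \<gamma> y = 1} \<inter> space (completion \<mu>') \<in> sets (completion \<mu>')"
      by (rule measurable_sets[OF fm2 borel_closed[OF cl\<gamma>]])
    moreover have "U \<in> sets (completion \<mu>')" using Ub s\<mu> by simp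
    ultimately have "U \<inter> (f -` {y. \<gamma> y = 1} \<inter> space (completion \<mu>')) \<in> sets (completion \<mu>')"
      by (rule sets.Int[rotated])
    then show ?thesis by (simp add: E_def sp\<mu>)
  qed
  have FSTc: "fst \<in> completion V \<rightarrow>\<^sub>M completion (weight V)" by (rule FST[OF sV])
  define S where "S = E \<times> (UNIV :: ('a \<Rightarrow>\<^sub>L 'a) set)"
  have indS: "indicator S z = (indicator E (fst z) :: real)" for z
    by (cases z) (auto simp: S_def indicator_def)
  have Sc: "S \<in> sets (completion V)"
  proof -
    have "fst -` E \<inter> space (completion V) \<in> sets (completion V)" using measurable_sets[OF FSTc Ecw] .
    moreover have "fst -` E \<inter> space (completion V) = S" by (auto simp: S_def spV)
    ultimately show ?thesis by simp
  qed
  define D' where "D' = density (completion V) (\<lambda>x. ennreal (indicator S x))"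
  define W where "W = restr_var V E"
  have Wd: "W = distr D' borel (\<lambda>x. x)"
    using restr_eq[OF sV Sc] unfolding W_def restr_var_def D'_def S_def by simp
  define \<mu>W where "\<mu>W = distr (density (completion \<mu>') (\<lambda>x. ennreal (indicator E x))) borel (\<lambda>x. x)"
  have sW: "sets W = sets borel" by (simp add: Wd)
  have spW: "space W = UNIV" by (simp add: Wd)
  have s\<mu>W: "sets \<mu>W = sets borel" by (simp add: \<mu>W_def)
  have Wem: "emeasure W A = emeasure (completion V) (A \<inter> S)" if "A \<in> sets borel" for A
    unfolding Wd D'_def by (rule restr_emeasure[OF sV Sc that])
  have \<mu>Wem: "emeasure \<mu>W A = emeasure (completion \<mu>') (A \<inter> E)" if "A \<in> sets borel" for A
    unfolding \<mu>W_def by (rule restr_emeasure[OF s\<mu> Ecm that])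
  have fstW: "fst \<in> W \<rightarrow>\<^sub>M borel" using fst_borel measurable_cong_sets[OF sW refl] by blast
  have wWd: "weight W = distr D' borel fst"
  proof -
    have "weight W = distr (distr D' borel (\<lambda>x. x)) borel fst" by (simp add: weight_def Wd)
    also have "\<dots> = distr D' borel (fst \<circ> (\<lambda>x. x))"
      by (rule distr_distr[OF fst_borel]) (unfold D'_def, rule id_meas_density[OF sV])
    finally show ?thesis by (simp add: o_def)
  qed
  have swW: "sets (weight W) = sets borel" by (simp add: weight_def)
  have timesB: "A \<times> (UNIV :: ('a \<Rightarrow>\<^sub>L 'a) set) \<in> sets borel" if "A \<in> sets borel" for A :: "'a set"
  proof -
    have "fst -` A \<inter> space borel \<in> sets (borel :: ('a \<times> ('a \<Rightarrow>\<^sub>L 'a)) measure)"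
      using measurable_sets[OF fst_borel that] .
    moreover have "fst -` A \<inter> space borel = A \<times> (UNIV :: ('a \<Rightarrow>\<^sub>L 'a) set)" by auto
    ultimately show ?thesis by simp
  qed
  have wWem: "emeasure (weight W) A = emeasure (completion V) ((A \<times> UNIV) \<inter> S)" if A: "A \<in> sets borel" for A
  proof -
    have "emeasure (weight W) A = emeasure W (fst -` A \<inter> space W)"
      unfolding weight_def using fstW A by (rule emeasure_distr)
    also have "fst -` A \<inter> space W = A \<times> UNIV" by (auto simp: spW)
    also have "emeasure W (A \<times> UNIV) = emeasure (completion V) ((A \<times> UNIV) \<inter> S)"
      using Wem timesB[OF A] by simp
    finally show ?thesis .
  qed
  have wVem: "emeasure (weight V) A = emeasure V (A \<times> UNIV)" if A: "A \<in> sets borel" for A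
  proof -
    have "emeasure (weight V) A = emeasure V (fst -` A \<inter> space V)"
      unfolding weight_def using fstV A by (rule emeasure_distr)
    also have "fst -` A \<inter> space V = A \<times> UNIV" by (auto simp: spV)
    finally show ?thesis .
  qed
  have leW: "emeasure W A \<le> emeasure V A" if A: "A \<in> sets V" for A
  proof -
    have Ab: "A \<in> sets borel" using A sV by simp
    have "emeasure W A = emeasure (completion V) (A \<inter> S)" using Wem Ab by simp
    also have "\<dots> \<le> emeasure (completion V) A" using A Sc by (intro emeasure_mono) auto
    also have "\<dots> = emeasure V A" using A by simp
    finally show ?thesis .
  qed
  have lewW: "emeasure (weight W) A \<le> emeasure (weight V) A" if A: "A \<in> sets (weight V)" for A
  proof -
    have Ab: "A \<in> sets borel" using A swV by simp
    have AU: "A \<times> UNIV \<in> sets V" using timesB[OF Ab] sV by simp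
    have "emeasure (weight W) A = emeasure (completion V) ((A \<times> UNIV) \<inter> S)" using wWem Ab by simp
    also have "\<dots> \<le> emeasure (completion V) (A \<times> UNIV)" using AU Sc by (intro emeasure_mono) auto
    also have "\<dots> = emeasure V (A \<times> UNIV)" using AU by simp
    also have "\<dots> = emeasure (weight V) A" using wVem Ab by simp
    finally show ?thesis .
  qed
  have le\<mu>W: "emeasure \<mu>W A \<le> emeasure \<mu>' A" if A: "A \<in> sets \<mu>'" for A
  proof -
    have Ab: "A \<in> sets borel" using A s\<mu> by simp
    have "emeasure \<mu>W A = emeasure (completion \<mu>') (A \<inter> E)" using \<mu>Wem Ab by simp
    also have "\<dots> \<le> emeasure (completion \<mu>') A" using A Ecm by (intro emeasure_mono) auto
    also have "\<dots> = emeasure \<mu>' A" using A by simp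
    finally show ?thesis .
  qed
  have sWV: "sets W = sets V" using sW sV by simp
  have swWV: "sets (weight W) = sets (weight V)" using swW swV by simp
  have s\<mu>W\<mu>: "sets \<mu>W = sets \<mu>'" using s\<mu>W s\<mu> by simp
  have N1: "U - f -` (D \<union> K) \<in> null_sets (completion (weight V))"
  proof -
    have clDK: "closed (D \<union> K)" using assms(4) compact_imp_closed[OF assms(5)] by auto
    have "f -` (D \<union> K) \<inter> space (completion (weight V)) \<in> sets (completion (weight V))"
      by (rule measurable_sets[OF fm1 borel_closed[OF clDK]])
    moreover have "U \<in> sets (completion (weight V))" using Ub swV by simp
    ultimately have "U - (f -` (D \<union> K) \<inter> space (completion (weight V))) \<in> sets (completion (weight V))"
      by (rule sets.Diff[rotated])
    then have "U - f -` (D \<union> K) \<in> sets (completion (weight V))" by (simp add: spwV)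
    then show ?thesis using assms(11) by (simp add: null_sets_def)
  qed
  have aeV: "AE x in completion (weight V). x \<in> U \<longrightarrow> f x \<in> D \<union> K"
    using AE_not_in[OF N1] by eventually_elim auto
  have KEY: "integral\<^sup>L (completion \<mu>') (\<lambda>x. indicator E x * (g (f x) * inner (\<theta> x) (\<eta>' x)))
       = integral\<^sup>L (completion V) (\<lambda>(x, P). indicator E x * (g (f x) * proj_div \<theta> x P))
         + integral\<^sup>L (completion (weight V)) (\<lambda>x. indicator E x * frechet_derivative g (at (f x)) (blinfun_apply (F x) (\<theta> x)))"
    if "test_field U \<theta>" "admissible_gamma g" for \<theta> g
    by (rule Key[OF sV rad aen \<eta>m fm2 EQ \<gamma>s \<gamma>b O1 Cc E_def Ecm aeV that])
  have idB: "(\<lambda>x. x) \<in> borel_measurable borel" by (rule borel_measurable_continuous_onI[OF continuous_on_id])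
  have FV: "first_variation W \<theta> = integral\<^sup>L (completion V) (\<lambda>z. indicator S z * proj_div \<theta> (fst z) (snd z))"
    if t: "test_field U \<theta>" for \<theta>
  proof -
    have pdB: "(\<lambda>z. proj_div \<theta> (fst z) (snd z)) \<in> borel_measurable borel"
      by (rule borel_measurable_continuous_onI[OF pd_cont[OF t]])
    have "first_variation W \<theta> = integral\<^sup>L W (\<lambda>z. proj_div \<theta> (fst z) (snd z))"
      unfolding first_variation_def by (simp add: case_prod_unfold)
    also have "\<dots> = integral\<^sup>L D' (\<lambda>z. proj_div \<theta> (fst z) (snd z))"
      unfolding Wd by (rule integral_distr[OF _ pdB]) (unfold D'_def, rule id_meas_density[OF sV])
    also have "\<dots> = integral\<^sup>L (completion V) (\<lambda>z. indicator S z *\<^sub>R proj_div \<theta> (fst z) (snd z))"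
      unfolding D'_def
    proof (rule integral_density)
      show "(\<lambda>z. proj_div \<theta> (fst z) (snd z)) \<in> borel_measurable (completion V)" by (rule cont_meas[OF sV pd_cont[OF t]])
      show "(\<lambda>z. indicator S z :: real) \<in> borel_measurable (completion V)" using Sc by simp
    qed auto
    finally show ?thesis by simp
  qed
  have BZ: "integral\<^sup>L (completion \<mu>') (\<lambda>x. indicator E x * inner (\<theta> x) (\<eta>' x)) = first_variation W \<theta>"
    if t: "test_field U \<theta>" for \<theta>
  proof -
    have "integral\<^sup>L (completion \<mu>') (\<lambda>x. indicator E x * inner (\<theta> x) (\<eta>' x))
        = integral\<^sup>L (completion \<mu>') (\<lambda>x. indicator E x * ((\<lambda>_. 1::real) (f x) * inner (\<theta> x) (\<eta>' x)))" by simp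
    also have "\<dots> = integral\<^sup>L (completion V) (\<lambda>(x, P). indicator E x * ((\<lambda>_. 1::real) (f x) * proj_div \<theta> x P))
         + integral\<^sup>L (completion (weight V)) (\<lambda>x. indicator E x * frechet_derivative (\<lambda>_. 1::real) (at (f x)) (blinfun_apply (F x) (\<theta> x)))"
      by (rule KEY[OF t adm_one])
    also have "\<dots> = integral\<^sup>L (completion V) (\<lambda>z. indicator S z * proj_div \<theta> (fst z) (snd z))"
      by (simp add: case_prod_unfold indS)
    also have "\<dots> = first_variation W \<theta>" using FV[OF t] by simp
    finally show ?thesis .
  qed
  have pc: "partitioned_component U m V W"
    unfolding partitioned_component_def
  proof (rule exI[of _ E], rule exI[of _ \<mu>'], rule exI[of _ \<eta>'], intro conjI)
    show "fv_rep U V \<mu>' \<eta>'" by (rule fvr)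
    show "E \<subseteq> U" by (rule EU)
    show "meas_set V \<mu>' E" unfolding meas_set_def using Ecw Ecm by simp
    show "0 < emeasure (completion (weight V)) E"
    proof -
      have "U \<inter> f -` K \<subseteq> E" using O1 by (auto simp: E_def)
      then have "emeasure (completion (weight V)) (U \<inter> f -` K) \<le> emeasure (completion (weight V)) E"
        using Ecw by (rule emeasure_mono)
      then show ?thesis using assms(12) by simp
    qed
    show "boundary_zero U V \<mu>' \<eta>' E" unfolding boundary_zero_def using BZ by (simp add: W_def)
    show "W = restr_var V E" by (simp add: W_def)
  qed
  have vW: "varifold U m W"
    unfolding varifold_def
  proof (intro conjI allI impI)
    show "sets W = sets borel" by (rule sW)
    show "emeasure W (- (U \<times> grass m)) = 0"
    proof (cases "- (U \<times> grass m) \<in> sets W")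
      case True
      then have "emeasure W (- (U \<times> grass m)) \<le> emeasure V (- (U \<times> grass m))" using leW sWV by simp
      then show ?thesis using V0 by simp
    next
      case False then show ?thesis by (rule emeasure_notin_sets)
    qed
    fix C' :: "'a set" assume C': "compact C' \<and> C' \<subseteq> U"
    have "C' \<in> sets borel" using C' by (intro borel_closed compact_imp_closed) simp
    then have "C' \<times> UNIV \<in> sets V" using timesB sV by simp
    then have "emeasure W (C' \<times> UNIV) \<le> emeasure V (C' \<times> UNIV)" by (rule leW)
    also have "\<dots> < \<infinity>" using Vfin C' by simp
    finally show "emeasure W (C' \<times> UNIV) < \<infinity>" .
  qed
  have c3: "emeasure (completion (weight W)) (U - f -` K) = 0"
  proof -
    obtain Sb Nb N' where Es: "E = Sb \<union> Nb" "Nb \<subseteq> N'" "N' \<in> null_sets (weight V)" "Sb \<in> sets (weight V)"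
      using Ecw by (rule sets_completionE)
    have Sbb: "Sb \<in> sets borel" using Es(4) swV by simp
    have N'b: "N' \<in> sets borel" using Es(3) swV by auto
    have m: "- Sb \<in> sets borel" using sets.compl_sets[OF Sbb] by (simp add: Compl_eq_Diff_UNIV)
    have cSb: "- Sb \<in> null_sets (weight W)"
    proof -
      have "emeasure (weight W) (- Sb) = emeasure (completion V) (((- Sb) \<times> UNIV) \<inter> S)" using wWem m by simp
      also have "\<dots> \<le> emeasure (completion V) (N' \<times> UNIV)"
      proof (rule emeasure_mono)
        show "((- Sb) \<times> UNIV) \<inter> S \<subseteq> N' \<times> UNIV" using Es(1,2) by (auto simp: S_def)
        show "N' \<times> UNIV \<in> sets (completion V)" using timesB[OF N'b] sV by simp
      qed
      also have "\<dots> = emeasure V (N' \<times> UNIV)" using timesB[OF N'b] sV by simp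
      also have "\<dots> = emeasure (weight V) N'" using wVem N'b by simp
      also have "\<dots> = 0" using Es(3) by auto
      finally show ?thesis using m swW by (auto simp: null_sets_def)
    qed
    have N1W: "U - f -` (D \<union> K) \<in> null_sets (completion (weight W))"
      by (rule null_transfer[OF swWV lewW N1])
    have sub: "U - f -` K \<subseteq> (- Sb) \<union> (U - f -` (D \<union> K))"
    proof
      fix x assume x: "x \<in> U - f -` K"
      show "x \<in> (- Sb) \<union> (U - f -` (D \<union> K))"
      proof (cases "x \<in> Sb")
        case True
        then have "x \<in> E" using Es(1) by auto
        then have g1: "\<gamma> (f x) = 1" by (simp add: E_def)
        have "f x \<notin> D"
        proof
          assume "f x \<in> D"
          then have "f x \<notin> C" using Cc(2) by auto
          then have "\<gamma> (f x) = 0" using Cc(3) by simp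
          then show False using g1 by simp
        qed
        then show ?thesis using x by auto
      next
        case False then show ?thesis by auto
      qed
    qed
    have "(- Sb) \<union> (U - f -` (D \<union> K)) \<in> null_sets (completion (weight W))"
      using null_sets_completionI[OF cSb] N1W by (rule null_sets.Un)
    then have "U - f -` K \<in> null_sets (completion (weight W))" by (rule null_sets_completion_subset[OF sub])
    then show ?thesis by auto
  qed
  obtain G where G: "\<forall>b\<in>Basis. G b \<in> borel_measurable \<mu>' \<and> (AE x in \<mu>'. \<eta>' x \<bullet> b = G b x)"
  proof -
    have "\<forall>b\<in>Basis. \<exists>g'. g' \<in> borel_measurable \<mu>' \<and> (AE x in \<mu>'. \<eta>' x \<bullet> b = g' x)"
    proof
      fix b :: 'a assume "b \<in> Basis"
      have "(\<lambda>x. \<eta>' x \<bullet> b) \<in> borel_measurable (completion \<mu>')"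
        using borel_measurable_inner[OF \<eta>m borel_measurable_const] .
      then show "\<exists>g'. g' \<in> borel_measurable \<mu>' \<and> (AE x in \<mu>'. \<eta>' x \<bullet> b = g' x)"
        using completion_ex_borel_measurable_real by blast
    qed
    from bchoice[OF this] obtain G0 where "\<forall>b\<in>Basis. G0 b \<in> borel_measurable \<mu>' \<and> (AE x in \<mu>'. \<eta>' x \<bullet> b = G0 b x)"
      by blast
    then show ?thesis by (rule that)
  qed
  define \<eta>'' where "\<eta>'' x = (\<Sum>b\<in>Basis. G b x *\<^sub>R b)" for x
  have \<eta>''m: "\<eta>'' \<in> borel_measurable \<mu>'"
    unfolding \<eta>''_def[abs_def] using G by (intro borel_measurable_sum borel_measurable_scaleR borel_measurable_const) auto
  have ae\<eta>: "AE x in \<mu>'. \<eta>' x = \<eta>'' x"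
  proof -
    have "AE x in \<mu>'. \<forall>b\<in>Basis. \<eta>' x \<bullet> b = G b x" using G by (intro AE_finite_allI) auto
    then show ?thesis
    proof eventually_elim
      case (elim x)
      have "\<eta>' x = (\<Sum>b\<in>Basis. (\<eta>' x \<bullet> b) *\<^sub>R b)" by (simp add: euclidean_representation)
      also have "\<dots> = \<eta>'' x" using elim by (simp add: \<eta>''_def)
      finally show ?case .
    qed
  qed
  have \<eta>''b: "\<eta>'' \<in> borel_measurable borel" using \<eta>''m measurable_cong_sets[OF s\<mu> refl] by blast
  have fvW: "fv_rep U W \<mu>W \<eta>''"
    unfolding fv_rep_def
  proof (intro conjI allI impI)
    show "radon_on U \<mu>W" unfolding radon_on_def
    proof (intro conjI allI impI)
      show "sets \<mu>W = sets borel" by (rule s\<mu>W)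
      have mU: "- U \<in> sets borel" using assms(3) by (intro borel_closed) auto
      have "(- U) \<inter> E = {}" using EU by auto
      then show "emeasure \<mu>W (- U) = 0" using \<mu>Wem[OF mU] by simp
      fix C' :: "'a set" assume C': "compact C' \<and> C' \<subseteq> U"
      have "C' \<in> sets borel" using C' by (intro borel_closed compact_imp_closed) simp
      then have "C' \<in> sets \<mu>'" using s\<mu> by simp
      then have "emeasure \<mu>W C' \<le> emeasure \<mu>' C'" by (rule le\<mu>W)
      also have "\<dots> < \<infinity>" using \<mu>fin C' by auto
      finally show "emeasure \<mu>W C' < \<infinity>" .
    qed
    show "\<eta>'' \<in> borel_measurable (completion \<mu>W)"
    proof (rule measurable_completion)
      show "\<eta>'' \<in> borel_measurable \<mu>W" using \<eta>''b measurable_cong_sets[OF s\<mu>W refl] by blast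
    qed
    show "AE x in \<mu>W. norm (\<eta>'' x) = 1"
    proof (rule dom_AE[OF s\<mu>W\<mu> le\<mu>W])
      show "AE x in \<mu>'. norm (\<eta>'' x) = 1" using aen ae\<eta> by eventually_elim simp
    qed
    fix \<theta> assume t: "test_field U \<theta>"
    have \<theta>b: "\<theta> \<in> borel_measurable borel" by (rule borel_measurable_continuous_onI[OF test_cont[OF t]])
    have ib: "(\<lambda>x. inner (\<theta> x) (\<eta>'' x)) \<in> borel_measurable borel" using \<theta>b \<eta>''b by (rule borel_measurable_inner)
    have "integral\<^sup>L \<mu>W (\<lambda>x. inner (\<theta> x) (\<eta>'' x))
        = integral\<^sup>L (density (completion \<mu>') (\<lambda>x. ennreal (indicator E x))) (\<lambda>x. inner (\<theta> x) (\<eta>'' x))"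
      unfolding \<mu>W_def by (rule integral_distr[OF id_meas_density[OF s\<mu>] ib])
    also have "\<dots> = integral\<^sup>L (completion \<mu>') (\<lambda>x. indicator E x *\<^sub>R inner (\<theta> x) (\<eta>'' x))"
    proof (rule integral_density)
      show "(\<lambda>x. inner (\<theta> x) (\<eta>'' x)) \<in> borel_measurable (completion \<mu>')"
        using ib measurable_cong_sets[OF s\<mu> refl] measurable_completion by blast
      show "(\<lambda>x. indicator E x :: real) \<in> borel_measurable (completion \<mu>')" using Ecm by simp
    qed auto
    also have "\<dots> = integral\<^sup>L (completion \<mu>') (\<lambda>x. indicator E x * inner (\<theta> x) (\<eta>' x))"
    proof (rule CM2)
      show "AE x in completion \<mu>'. indicator E x *\<^sub>R inner (\<theta> x) (\<eta>'' x) = indicator E x * inner (\<theta> x) (\<eta>' x)"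
        using AE_completion[OF ae\<eta>] by eventually_elim simp
    qed
    also have "\<dots> = first_variation W \<theta>" by (rule BZ[OF t])
    finally show "first_variation W \<theta> = integral\<^sup>L \<mu>W (\<lambda>x. inner (\<theta> x) (\<eta>'' x))" by simp
  qed
  have lemwW: "weight W \<le> weight V"
  proof -
    have sp: "space (weight W) = space (weight V)" by (simp add: weight_def)
    have "emeasure (weight W) A \<le> emeasure (weight V) A" for A
    proof (cases "A \<in> sets (weight V)")
      case True then show ?thesis by (rule lewW)
    next
      case False
      then have "A \<notin> sets (weight W)" using swWV by simp
      then show ?thesis by (simp add: emeasure_notin_sets)
    qed
    then show ?thesis using sp swWV by (simp add: le_measure_iff le_fun_def)
  qed
  have gwW: "gen_weakly_diff U W f"
    unfolding gen_weakly_diff_def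
  proof (rule exI[of _ \<mu>W], rule exI[of _ \<eta>''], intro conjI)
    show "fv_rep U W \<mu>W \<eta>''" by (rule fvW)
    show "f \<in> borel_measurable (completion (weight W))" by (rule dom_measurable_completion[OF swWV lewW fm1])
    show "f \<in> borel_measurable (completion \<mu>W)" by (rule dom_measurable_completion[OF s\<mu>W\<mu> le\<mu>W fm2])
    show "\<forall>C s. compact C \<and> C \<subseteq> U \<and> 0 \<le> s \<longrightarrow>
           emeasure (completion (weight W)) (C \<inter> {x. norm (f x) > s}) < \<infinity> \<and>
           emeasure (completion \<mu>W) (C \<inter> {x. norm (f x) > s}) < \<infinity>"
    proof (intro allI impI conjI)
      fix C' :: "'a set" and s :: real assume H: "compact C' \<and> C' \<subseteq> U \<and> 0 \<le> s"
      have Cb: "C' \<in> sets borel" using H by (intro borel_closed compact_imp_closed) simp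
      have o: "open {y::'y. s < norm y}" by (intro open_Collect_less continuous_on_const continuous_on_norm continuous_on_id)
      have m1: "C' \<inter> {x. norm (f x) > s} \<in> sets (completion (weight V))"
      proof -
        have "f -` {y. s < norm y} \<inter> space (completion (weight V)) \<in> sets (completion (weight V))"
          by (rule measurable_sets[OF fm1 borel_open[OF o]])
        moreover have "C' \<in> sets (completion (weight V))" using Cb swV by simp
        ultimately have "C' \<inter> (f -` {y. s < norm y} \<inter> space (completion (weight V))) \<in> sets (completion (weight V))"
          by (rule sets.Int[rotated])
        then show ?thesis by (simp add: spwV vimage_def)
      qed
      have m2: "C' \<inter> {x. norm (f x) > s} \<in> sets (completion \<mu>')"
      proof -
        have "f -` {y. s < norm y} \<inter> space (completion \<mu>') \<in> sets (completion \<mu>')"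
          by (rule measurable_sets[OF fm2 borel_open[OF o]])
        moreover have "C' \<in> sets (completion \<mu>')" using Cb s\<mu> by simp
        ultimately have "C' \<inter> (f -` {y. s < norm y} \<inter> space (completion \<mu>')) \<in> sets (completion \<mu>')"
          by (rule sets.Int[rotated])
        then show ?thesis by (simp add: sp\<mu> vimage_def)
      qed
      have "emeasure (completion (weight W)) (C' \<inter> {x. norm (f x) > s}) \<le> emeasure (completion (weight V)) (C' \<inter> {x. norm (f x) > s})"
        by (rule dom_emeasure_completion[OF swWV lewW m1])
      also have "\<dots> < \<infinity>" using fin H by blast
      finally show "emeasure (completion (weight W)) (C' \<inter> {x. norm (f x) > s}) < \<infinity>" .
      have "emeasure (completion \<mu>W) (C' \<inter> {x. norm (f x) > s}) \<le> emeasure (completion \<mu>') (C' \<inter> {x. norm (f x) > s})"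
        by (rule dom_emeasure_completion[OF s\<mu>W\<mu> le\<mu>W m2])
      also have "\<dots> < \<infinity>" using fin H by blast
      finally show "emeasure (completion \<mu>W) (C' \<inter> {x. norm (f x) > s}) < \<infinity>" .
    qed
    show "\<exists>F :: 'a \<Rightarrow> ('a \<Rightarrow>\<^sub>L 'y).
           F \<in> borel_measurable (completion (weight W)) \<and>
           (\<forall>C s. compact C \<and> C \<subseteq> U \<and> 0 \<le> s \<longrightarrow>
              (\<integral>\<^sup>+ x. indicator (C \<inter> {x. norm (f x) \<le> s}) x * ennreal (norm (F x))
                 \<partial>completion (weight W)) < \<infinity>) \<and>
           (\<forall>\<theta> \<gamma>. test_field U \<theta> \<and> admissible_gamma \<gamma> \<longrightarrow>
              integral\<^sup>L (completion \<mu>W) (\<lambda>x. \<gamma> (f x) * inner (\<theta> x) (\<eta>'' x))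
              = integral\<^sup>L (completion W) (\<lambda>(x, P). \<gamma> (f x) * proj_div \<theta> x P)
                + integral\<^sup>L (completion (weight W))
                    (\<lambda>x. frechet_derivative \<gamma> (at (f x)) (blinfun_apply (F x) (\<theta> x))))"
    proof (rule exI[of _ F], intro conjI)
      show "F \<in> borel_measurable (completion (weight W))" by (rule dom_measurable_completion[OF swWV lewW Fm])
      show "\<forall>C s. compact C \<and> C \<subseteq> U \<and> 0 \<le> s \<longrightarrow>
              (\<integral>\<^sup>+ x. indicator (C \<inter> {x. norm (f x) \<le> s}) x * ennreal (norm (F x))
                 \<partial>completion (weight W)) < \<infinity>"
      proof (intro allI impI)
        fix C' :: "'a set" and s :: real assume H: "compact C' \<and> C' \<subseteq> U \<and> 0 \<le> s"
        have "(\<integral>\<^sup>+ x. indicator (C' \<inter> {x. norm (f x) \<le> s}) x * ennreal (norm (F x)) \<partial>completion (weight W))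
            = (\<integral>\<^sup>+ x. indicator (C' \<inter> {x. norm (f x) \<le> s}) x * ennreal (norm (F x)) \<partial>weight W)"
          by (rule nn_integral_completion)
        also have "\<dots> \<le> (\<integral>\<^sup>+ x. indicator (C' \<inter> {x. norm (f x) \<le> s}) x * ennreal (norm (F x)) \<partial>weight V)"
          by (rule nn_integral_mono_measure[OF swWV lemwW])
        also have "\<dots> = (\<integral>\<^sup>+ x. indicator (C' \<inter> {x. norm (f x) \<le> s}) x * ennreal (norm (F x)) \<partial>completion (weight V))"
          by (rule nn_integral_completion[symmetric])
        also have "\<dots> < \<infinity>" using Fint H by blast
        finally show "(\<integral>\<^sup>+ x. indicator (C' \<inter> {x. norm (f x) \<le> s}) x * ennreal (norm (F x)) \<partial>completion (weight W)) < \<infinity>" .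
      qed
      show "\<forall>\<theta> \<gamma>. test_field U \<theta> \<and> admissible_gamma \<gamma> \<longrightarrow>
              integral\<^sup>L (completion \<mu>W) (\<lambda>x. \<gamma> (f x) * inner (\<theta> x) (\<eta>'' x))
              = integral\<^sup>L (completion W) (\<lambda>(x, P). \<gamma> (f x) * proj_div \<theta> x P)
                + integral\<^sup>L (completion (weight W))
                    (\<lambda>x. frechet_derivative \<gamma> (at (f x)) (blinfun_apply (F x) (\<theta> x)))"
      proof (intro allI impI)
        fix \<theta> :: "'a \<Rightarrow> 'a" and g :: "'y \<Rightarrow> real" assume H: "test_field U \<theta> \<and> admissible_gamma g"
        have t: "test_field U \<theta>" and ga: "admissible_gamma g" using H by auto
        have gs: "smooth_on UNIV g" using ga by (simp add: admissible_gamma_def)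
        have gc: "continuous_on UNIV g" by (rule smooth_cont[OF gs])
        have \<theta>c: "continuous_on UNIV \<theta>" by (rule test_cont[OF t])
        have gf\<mu>: "(\<lambda>x. g (f x)) \<in> borel_measurable (completion \<mu>')"
          using measurable_compose[OF fm2 borel_measurable_continuous_onI[OF gc]] .
        have \<theta>\<mu>: "\<theta> \<in> borel_measurable (completion \<mu>')" by (rule cont_meas[OF s\<mu> \<theta>c])
        have \<eta>''\<mu>: "\<eta>'' \<in> borel_measurable (completion \<mu>')" using \<eta>''m by (rule measurable_completion)
        have h1m: "(\<lambda>x. g (f x) * inner (\<theta> x) (\<eta>'' x)) \<in> borel_measurable (completion \<mu>')"
          by (rule borel_measurable_times[OF gf\<mu> borel_measurable_inner[OF \<theta>\<mu> \<eta>''\<mu>]])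
        have gfV: "(\<lambda>x. g (f x)) \<in> borel_measurable (completion (weight V))"
          using measurable_compose[OF fm1 borel_measurable_continuous_onI[OF gc]] .
        have gfz: "(\<lambda>z. g (f (fst z))) \<in> borel_measurable (completion V)"
          using measurable_compose[OF FSTc gfV] .
        have pdm: "(\<lambda>z. proj_div \<theta> (fst z) (snd z)) \<in> borel_measurable (completion V)"
          by (rule cont_meas[OF sV pd_cont[OF t]])
        have h2m: "(\<lambda>z. g (f (fst z)) * proj_div \<theta> (fst z) (snd z)) \<in> borel_measurable (completion V)"
          by (rule borel_measurable_times[OF gfz pdm])
        have \<theta>V: "\<theta> \<in> borel_measurable (completion (weight V))" by (rule cont_meas[OF swV \<theta>c])
        have F\<theta>: "(\<lambda>x. blinfun_apply (F x) (\<theta> x)) \<in> borel_measurable (completion (weight V))"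
        proof -
          have Fb: "(\<lambda>x. blinfun_apply (F x) b) \<in> borel_measurable (completion (weight V))" for b
          proof -
            have "continuous_on UNIV (\<lambda>L::'a \<Rightarrow>\<^sub>L 'y. blinfun_apply L b)"
              by (intro blinfun.continuous_on continuous_on_id continuous_on_const)
            from measurable_compose[OF Fm borel_measurable_continuous_onI[OF this]] show ?thesis .
          qed
          have eq: "blinfun_apply (F x) (\<theta> x) = (\<Sum>b\<in>Basis. (\<theta> x \<bullet> b) *\<^sub>R blinfun_apply (F x) b)" for x
          proof -
            have "blinfun_apply (F x) (\<theta> x) = blinfun_apply (F x) (\<Sum>b\<in>Basis. (\<theta> x \<bullet> b) *\<^sub>R b)"
              by (simp add: euclidean_representation)
            also have "\<dots> = (\<Sum>b\<in>Basis. (\<theta> x \<bullet> b) *\<^sub>R blinfun_apply (F x) b)"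
              by (simp add: blinfun.sum_right blinfun.scaleR_right)
            finally show ?thesis .
          qed
          have "(\<lambda>x. \<Sum>b\<in>Basis. (\<theta> x \<bullet> b) *\<^sub>R blinfun_apply (F x) b) \<in> borel_measurable (completion (weight V))"
            by (intro borel_measurable_sum borel_measurable_scaleR borel_measurable_inner \<theta>V Fb borel_measurable_const)
          then show ?thesis by (simp add: eq)
        qed
        define hh where "hh x = frechet_derivative g (at (f x)) (blinfun_apply (F x) (\<theta> x))" for x
        have h3m: "hh \<in> borel_measurable (completion (weight V))"
          using measurable_compose[OF borel_measurable_Pair[OF fm1 F\<theta>] borel_measurable_continuous_onI[OF fd_cont[OF gs]]]
          by (simp add: hh_def[abs_def])
        have e1: "integral\<^sup>L (completion \<mu>W) (\<lambda>x. g (f x) * inner (\<theta> x) (\<eta>'' x))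
            = integral\<^sup>L (completion \<mu>') (\<lambda>x. indicator E x * (g (f x) * inner (\<theta> x) (\<eta>'' x)))"
          unfolding \<mu>W_def by (rule GL[OF s\<mu> Ecm idB]) (simp add: distr_id_borel[OF s\<mu>] h1m)
        also have "\<dots> = integral\<^sup>L (completion \<mu>') (\<lambda>x. indicator E x * (g (f x) * inner (\<theta> x) (\<eta>' x)))"
        proof (rule CM2)
          show "AE x in completion \<mu>'. indicator E x * (g (f x) * inner (\<theta> x) (\<eta>'' x)) = indicator E x * (g (f x) * inner (\<theta> x) (\<eta>' x))"
            using AE_completion[OF ae\<eta>] by eventually_elim simp
        qed
        finally have e1': "integral\<^sup>L (completion \<mu>W) (\<lambda>x. g (f x) * inner (\<theta> x) (\<eta>'' x))
            = integral\<^sup>L (completion \<mu>') (\<lambda>x. indicator E x * (g (f x) * inner (\<theta> x) (\<eta>' x)))" .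
        have e2: "integral\<^sup>L (completion W) (\<lambda>(x, P). g (f x) * proj_div \<theta> x P)
            = integral\<^sup>L (completion V) (\<lambda>(x, P). indicator E x * (g (f x) * proj_div \<theta> x P))"
        proof -
          have "integral\<^sup>L (completion (distr D' borel (\<lambda>x. x))) (\<lambda>z. g (f (fst z)) * proj_div \<theta> (fst z) (snd z))
             = integral\<^sup>L (completion V) (\<lambda>z. indicator S z * (g (f (fst z)) * proj_div \<theta> (fst z) (snd z)))"
            unfolding D'_def by (rule GL[OF sV Sc idB]) (simp add: distr_id_borel[OF sV] h2m)
          then show ?thesis by (simp add: Wd case_prod_unfold indS)
        qed
        have e3: "integral\<^sup>L (completion (weight W)) hh
            = integral\<^sup>L (completion (weight V)) (\<lambda>x. indicator E x * hh x)"
        proof -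
          have "integral\<^sup>L (completion (distr D' borel fst)) hh
              = integral\<^sup>L (completion V) (\<lambda>z. indicator S z * hh (fst z))"
            unfolding D'_def by (rule GL[OF sV Sc fst_borel]) (use h3m in \<open>simp add: weight_def\<close>)
          also have "\<dots> = integral\<^sup>L (completion V) (\<lambda>z. (\<lambda>x. indicator E x * hh x) (fst z))"
            by (simp add: indS)
          also have "\<dots> = integral\<^sup>L (completion (weight V)) (\<lambda>x. indicator E x * hh x)"
          proof (rule int_weight[OF sV, symmetric])
            show "(\<lambda>x. indicator E x * hh x) \<in> borel_measurable (completion (weight V))"
              using Ecw h3m by (intro borel_measurable_times) auto
          qed
          finally show ?thesis by (simp add: wWd)
        qed
        show "integral\<^sup>L (completion \<mu>W) (\<lambda>x. g (f x) * inner (\<theta> x) (\<eta>'' x))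
              = integral\<^sup>L (completion W) (\<lambda>(x, P). g (f x) * proj_div \<theta> x P)
                + integral\<^sup>L (completion (weight W))
                    (\<lambda>x. frechet_derivative g (at (f x)) (blinfun_apply (F x) (\<theta> x)))"
          using e1' e2 e3 KEY[OF t ga] by (simp add: hh_def[abs_def])
      qed
    qed
  qed
  show ?thesis using vW pc c3 gwW by blast
qed


end
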